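(* Let $F$ be a connected compact simple Lie group, $m\ge 2$, and consider the $F^m$-invariant metric on $F^m/\mathrm{diag}(F)$ defined by the inner product $(\cdot,\cdot)$ on $\mathfrak g_m=\mathfrak f\oplus\cdots\oplus\mathfrak f\oplus 0$ given by $\big((x_1,\dots,x_{m-1},0)\otimes Z,(x_1,\dots,x_{m-1},0)\otimes Z\big)=f(x_1,\dots,x_{m-1})\langle Z,Z\rangle$ for all $x_i\in\mathbb R$, $Z\in\mathfrak f$, where $f(x)=\sum_{i,j=1}^{m-1}a_{ij}x_ix_j$ ($a_{ij}=a_{ji}$) is a positive definite quadratic form. The metric is naturally reductive if and only if one of the following holds: (a) $a_{ii}>0$ for all $i$ and $a_{ij}=0$ for $i\neq j$; (b) there is $k\in\{1,\dots,m-1\}$ such that $-a_{ik}=a_{ii}>0$ for all $i\neq k$, $a_{ij}=0$ whenever $i,j,k$ are pairwise distinct, and $a_{kk}>\sum_{i\neq k}a_{ii}$; (c) $a_{ij}=\delta_{ij}\alpha_i-\frac{\alpha_i\alpha_j}{S}$ for $i,j=1,\dots,m-1$, where $\alpha_1,\dots,\alpha_m\in\mathbb R\setminus\{0\}$, $S=\sum_{i=1}^m\alpha_i$, and either $\alpha_i>0$ for all $i=1,\dots,m$, or exactly one $\alpha_i$ is negative and $S<0$.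
   Context: $F$ is a connected compact simple Lie group with Lie algebra $\mathfrak f$; $\mathfrak g=m\mathfrak f$, $\mathfrak h=\mathrm{diag}(\mathfrak f)$. $\langle\cdot,\cdot\rangle$ is minus the Killing form. For $a=(a_1,\dots,a_m)\in\mathbb R^m$ and $X\in\mathfrak f$, $a\otimes X$ denotes $(a_1X,\dots,a_mX)\in\mathfrak g$. $\mathfrak g_m$ is the ideal of $\mathfrak g$ with zero in the last copy of $\mathfrak f$; it is an $\mathrm{Ad}(\mathrm{diag}(F))$-invariant complement of $\mathfrak h$, and $F^m$-invariant metrics on $F^m/\mathrm{diag}(F)$ correspond to $\mathrm{Ad}(\mathrm{diag}(F))$-invariant inner products on it. A metric is naturally reductive if some $\mathrm{Ad}(H)$-invariant complement $\mathfrak p$ of $\mathfrak h$ and the corresponding inner product $(\cdot,\cdot)$ on $\mathfrak p$ satisfy $([X,Y]_{\mathfrak p},X)=0$ for all $X,Y\in\mathfrak p$. *)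

theory Defs
  imports "HOL-Analysis.Analysis"
begin

(* The Lie algebra f of F is modelled as a finite-dimensional real vector space 'v
   (class euclidean_space) with a bracket br. *)

definition killing :: "('v::euclidean_space \<Rightarrow> 'v \<Rightarrow> 'v) \<Rightarrow> 'v \<Rightarrow> 'v \<Rightarrow> real" where
  "killing br X Y = (\<Sum>b\<in>Basis. (br X (br Y b)) \<bullet> b)"

definition lie_algebra :: "('v::euclidean_space \<Rightarrow> 'v \<Rightarrow> 'v) \<Rightarrow> bool" where
  "lie_algebra br \<longleftrightarrow> bilinear br \<and> (\<forall>X. br X X = 0) \<and>
     (\<forall>X Y Z. br X (br Y Z) + br Y (br Z X) + br Z (br X Y) = 0)"

definition simple_lie_algebra :: "('v::euclidean_space \<Rightarrow> 'v \<Rightarrow> 'v) \<Rightarrow> bool" where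
  "simple_lie_algebra br \<longleftrightarrow> lie_algebra br \<and> (\<exists>X Y. br X Y \<noteq> 0) \<and>
     (\<forall>I. subspace I \<and> (\<forall>X\<in>I. \<forall>Y. br Y X \<in> I) \<longrightarrow> I = {0} \<or> I = UNIV)"

(* compact semisimple <-> Killing form negative definite *)
definition compact_simple_lie_algebra :: "('v::euclidean_space \<Rightarrow> 'v \<Rightarrow> 'v) \<Rightarrow> bool" where
  "compact_simple_lie_algebra br \<longleftrightarrow> simple_lie_algebra br \<and> (\<forall>X. X \<noteq> 0 \<longrightarrow> killing br X X < 0)"

(* g = m f : elements are X :: nat => 'v, with components X 1, ..., X m, zero elsewhere *)
definition gset :: "nat \<Rightarrow> (nat \<Rightarrow> 'v::real_vector) set" where
  "gset m = {X. \<forall>i. i \<notin> {1..m} \<longrightarrow> X i = 0}"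

definition hset :: "nat \<Rightarrow> (nat \<Rightarrow> 'v::real_vector) set" where
  "hset m = {X \<in> gset m. \<exists>Z. \<forall>i\<in>{1..m}. X i = Z}"

definition gmset :: "nat \<Rightarrow> (nat \<Rightarrow> 'v::real_vector) set" where
  "gmset m = {X \<in> gset m. X m = 0}"

definition gbr :: "('v \<Rightarrow> 'v \<Rightarrow> 'v) \<Rightarrow> (nat \<Rightarrow> 'v) \<Rightarrow> (nat \<Rightarrow> 'v) \<Rightarrow> nat \<Rightarrow> 'v" where
  "gbr br X Y = (\<lambda>i. br (X i) (Y i))"

definition is_subspace_g :: "nat \<Rightarrow> (nat \<Rightarrow> 'v::real_vector) set \<Rightarrow> bool" where
  "is_subspace_g m P \<longleftrightarrow> P \<subseteq> gset m \<and> (\<lambda>i. 0) \<in> P \<and>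
     (\<forall>X\<in>P. \<forall>Y\<in>P. (\<lambda>i. X i + Y i) \<in> P) \<and> (\<forall>c. \<forall>X\<in>P. (\<lambda>i. c *\<^sub>R X i) \<in> P)"

definition is_complement_h :: "nat \<Rightarrow> (nat \<Rightarrow> 'v::real_vector) set \<Rightarrow> bool" where
  "is_complement_h m P \<longleftrightarrow> is_subspace_g m P \<and> P \<inter> hset m = {\<lambda>i. 0} \<and>
     (\<forall>X\<in>gset m. \<exists>Y\<in>P. \<exists>W\<in>hset m. X = (\<lambda>i. Y i + W i))"

(* invariance under Ad(H), H = diag(F) connected, i.e. under ad(h) *)
definition h_invariant :: "('v::real_vector \<Rightarrow> 'v \<Rightarrow> 'v) \<Rightarrow> nat \<Rightarrow> (nat \<Rightarrow> 'v) set \<Rightarrow> bool" where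
  "h_invariant br m P \<longleftrightarrow> (\<forall>W\<in>hset m. \<forall>X\<in>P. gbr br W X \<in> P)"

definition proj_p :: "nat \<Rightarrow> (nat \<Rightarrow> 'v::real_vector) set \<Rightarrow> (nat \<Rightarrow> 'v) \<Rightarrow> nat \<Rightarrow> 'v" where
  "proj_p m P V = (THE Y. Y \<in> P \<and> (\<lambda>i. V i - Y i) \<in> hset m)"

(* projection g -> g_m along h  (identifies any complement p with g_m = g/h) *)
definition proj_gm :: "nat \<Rightarrow> (nat \<Rightarrow> 'v::real_vector) \<Rightarrow> nat \<Rightarrow> 'v" where
  "proj_gm m X = (\<lambda>i. if i \<in> {1..<m} then X i - X m else 0)"

(* inner product on g_m: ((x (x) Z),(y (x) W)) = sum a_ij x_i y_j <Z,W>,  <,> = - Killing *)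
definition Qform :: "('v::euclidean_space \<Rightarrow> 'v \<Rightarrow> 'v) \<Rightarrow> (nat \<Rightarrow> nat \<Rightarrow> real) \<Rightarrow> nat
     \<Rightarrow> (nat \<Rightarrow> 'v) \<Rightarrow> (nat \<Rightarrow> 'v) \<Rightarrow> real" where
  "Qform br a m X Y = (\<Sum>i\<in>{1..<m}. \<Sum>j\<in>{1..<m}. a i j * (- killing br (X i) (Y j)))"

definition naturally_reductive :: "('v::euclidean_space \<Rightarrow> 'v \<Rightarrow> 'v) \<Rightarrow> (nat \<Rightarrow> nat \<Rightarrow> real) \<Rightarrow> nat \<Rightarrow> bool" where
  "naturally_reductive br a m \<longleftrightarrow> (\<exists>P. is_complement_h m P \<and> h_invariant br m P \<and>
     (\<forall>X\<in>P. \<forall>Y\<in>P. Qform br a m (proj_gm m (proj_p m P (gbr br X Y))) (proj_gm m X) = 0))"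

end

theory Submission
  imports Defs
begin



lemma trace_expand:
  fixes f :: "'v::euclidean_space \<Rightarrow> 'v"
  assumes "linear f"
  shows "f x \<bullet> b = (\<Sum>c\<in>Basis. (x \<bullet> c) * (f c \<bullet> b))"
proof -
  have e: "x = (\<Sum>c\<in>Basis. (x \<bullet> c) *\<^sub>R c)" by (rule euclidean_representation[symmetric])
  have "f x = (\<Sum>c\<in>Basis. f ((x \<bullet> c) *\<^sub>R c))"
    by (subst e) (rule linear_sum[OF assms])
  also have "\<dots> = (\<Sum>c\<in>Basis. (x \<bullet> c) *\<^sub>R f c)"
    by (rule sum.cong) (auto simp: linear_scale[OF assms])
  finally show ?thesis by (simp add: inner_sum_left)
qed

definition trc :: "('v::euclidean_space \<Rightarrow> 'v) \<Rightarrow> real" where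
  "trc f = (\<Sum>b\<in>Basis. f b \<bullet> b)"

lemma trace_comm:
  fixes f g :: "'v::euclidean_space \<Rightarrow> 'v"
  assumes "linear f" "linear g"
  shows "trc (\<lambda>x. f (g x)) = trc (\<lambda>x. g (f x))"
proof -
  have "trc (\<lambda>x. f (g x)) = (\<Sum>b\<in>Basis. \<Sum>c\<in>Basis. (g b \<bullet> c) * (f c \<bullet> b))"
    unfolding trc_def by (rule sum.cong[OF refl], rule trace_expand[OF assms(1)])
  also have "\<dots> = (\<Sum>c\<in>Basis. \<Sum>b\<in>Basis. (f c \<bullet> b) * (g b \<bullet> c))"
    by (subst sum.swap) (simp add: mult.commute)
  also have "\<dots> = trc (\<lambda>x. g (f x))"
    unfolding trc_def by (rule sum.cong[OF refl], rule trace_expand[OF assms(2), symmetric])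
  finally show ?thesis .
qed

lemma trc_diff: "trc (\<lambda>x. f x - g x) = trc f - trc g"
  unfolding trc_def by (simp add: inner_diff_left sum_subtractf)

lemma trc_add: "trc (\<lambda>x. f x + g x) = trc f + trc g"
  unfolding trc_def by (simp add: inner_add_left sum.distrib)

lemma trc_scale: "trc (\<lambda>x. c *\<^sub>R f x) = c * trc f"
  unfolding trc_def by (simp add: sum_distrib_left)

lemma trc_zero: "trc (\<lambda>x. 0) = 0"
  unfolding trc_def by simp

lemma sum3_neg: "(a::'a::ab_group_add) + b + c = 0 \<Longrightarrow> - c = a + b"
proof -
  assume h: "a + b + c = 0"
  have "a + b = (a + b + c) - c" by simp
  then show ?thesis using h by simp
qed

locale CSL =
  fixes br :: "'v::euclidean_space \<Rightarrow> 'v \<Rightarrow> 'v"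
  assumes csl: "compact_simple_lie_algebra br"
begin

lemma bil: "bilinear br"
  using csl unfolding compact_simple_lie_algebra_def simple_lie_algebra_def lie_algebra_def by blast

lemma lr: "linear (br X)"
  using bil unfolding bilinear_def by blast

lemma ll: "linear (\<lambda>Y. br Y Z)"
  using bil unfolding bilinear_def by blast

lemma alt: "br X X = 0"
  using csl unfolding compact_simple_lie_algebra_def simple_lie_algebra_def lie_algebra_def by blast

lemma jac: "br X (br Y Z) + br Y (br Z X) + br Z (br X Y) = 0"
  using csl unfolding compact_simple_lie_algebra_def simple_lie_algebra_def lie_algebra_def by blast

lemma simple: "subspace I \<Longrightarrow> (\<forall>X\<in>I. \<forall>Y. br Y X \<in> I) \<Longrightarrow> I = {0} \<or> I = UNIV"
  using csl unfolding compact_simple_lie_algebra_def simple_lie_algebra_def by blast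

lemma nonab: "\<exists>X Y. br X Y \<noteq> 0"
  using csl unfolding compact_simple_lie_algebra_def simple_lie_algebra_def by blast

lemma negdef: "X \<noteq> 0 \<Longrightarrow> killing br X X < 0"
  using csl unfolding compact_simple_lie_algebra_def by blast

lemma badd: "br (X + Y) Z = br X Z + br Y Z" "br X (Y + Z) = br X Y + br X Z"
  using bilinear_ladd[OF bil] bilinear_radd[OF bil] by auto

lemma bsub: "br (X - Y) Z = br X Z - br Y Z" "br X (Y - Z) = br X Y - br X Z"
  using bilinear_lsub[OF bil] bilinear_rsub[OF bil] by auto

lemma bscale: "br (c *\<^sub>R X) Z = c *\<^sub>R br X Z" "br X (c *\<^sub>R Z) = c *\<^sub>R br X Z"
  using bilinear_lmul[OF bil] bilinear_rmul[OF bil] by auto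

lemma bzero: "br 0 Z = 0" "br X 0 = 0"
  using bilinear_lzero[OF bil] bilinear_rzero[OF bil] by auto

lemma anti: "br X Y = - br Y X"
proof -
  have "br (X + Y) (X + Y) = br X X + br X Y + (br Y X + br Y Y)" by (simp add: badd)
  then have "br X Y + br Y X = 0" by (simp add: alt)
  then show ?thesis by (simp add: eq_neg_iff_add_eq_0)
qed

lemma ad_hom: "br (br X Y) Z = br X (br Y Z) - br Y (br X Z)"
proof -
  have "br (br X Y) Z = - br Z (br X Y)" by (rule anti)
  also have "\<dots> = br X (br Y Z) + br Y (br Z X)" using jac[of X Y Z] by (rule sum3_neg)
  also have "br Y (br Z X) = - br Y (br X Z)" using anti[of Z X] bilinear_rneg[OF bil] by simp
  finally show ?thesis by simp
qed

lemma killing_trc: "killing br X Y = trc (\<lambda>Z. br X (br Y Z))"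
  unfolding killing_def trc_def by simp

lemma killing_sym: "killing br X Y = killing br Y X"
  unfolding killing_trc by (rule trace_comm[OF lr lr])

lemma lin_comp: "linear (\<lambda>Z. br X (br Y Z))"
  using linear_compose[OF lr lr] by (simp add: o_def)

lemma killing_inv: "killing br (br A B) C = - killing br B (br A C)"
proof -
  have 1: "killing br (br A B) C = trc (\<lambda>Z. br A (br B (br C Z))) - trc (\<lambda>Z. br B (br A (br C Z)))"
    unfolding killing_trc ad_hom by (rule trc_diff)
  have 2: "killing br B (br A C) = trc (\<lambda>Z. br B (br A (br C Z))) - trc (\<lambda>Z. br B (br C (br A Z)))"
    unfolding killing_trc ad_hom bsub by (rule trc_diff)
  have 3: "trc (\<lambda>Z. br A (br B (br C Z))) = trc (\<lambda>Z. br B (br C (br A Z)))"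
    by (rule trace_comm[OF lr lin_comp])
  show ?thesis using 1 2 3 by simp
qed


lemma killing_bil: "bilinear (killing br)"
proof -
  have l1: "linear (\<lambda>X. killing br X Y)" for Y
  proof (rule linearI)
    fix X1 X2 :: 'v and c :: real
    show "killing br (X1 + X2) Y = killing br X1 Y + killing br X2 Y"
      unfolding killing_trc badd by (rule trc_add)
    show "killing br (c *\<^sub>R X1) Y = c *\<^sub>R killing br X1 Y"
      unfolding killing_trc bscale by (simp add: trc_scale)
  qed
  have l2: "linear (\<lambda>Y. killing br X Y)" for X
    using l1[of X] by (subst killing_sym) simp
  show ?thesis unfolding bilinear_def using l1 l2 by blast
qed

definition K :: "'v \<Rightarrow> 'v \<Rightarrow> real" where "K X Y = - killing br X Y"

lemma K_bil: "bilinear K"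
proof -
  have "bilinear (\<lambda>X Y. - killing br X Y)"
    using killing_bil unfolding bilinear_def
    by (auto intro!: linear_compose_neg[unfolded o_def])
  then show ?thesis unfolding K_def[abs_def] .
qed

lemma K_sym: "K X Y = K Y X" unfolding K_def using killing_sym by simp
lemma K_pos: "X \<noteq> 0 \<Longrightarrow> K X X > 0" unfolding K_def using negdef by force
lemma K_inv: "K (br A B) C = - K B (br A C)" unfolding K_def using killing_inv by simp
lemma K_alt: "K (br A B) A = 0"
  using K_inv[of A B A] alt bilinear_rzero[OF K_bil] by simp
lemma K_swap: "K (br A B) C = - K (br C B) A"
proof -
  have "K (br C B) A = - K B (br C A)" by (rule K_inv)
  also have "br C A = - br A C" by (rule anti)
  finally have "K (br C B) A = K B (br A C)" using bilinear_rneg[OF K_bil] by simp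
  then show ?thesis using K_inv[of A B C] by simp
qed

lemma real_quad_zero:
  fixes a c :: real
  assumes "\<And>t. 2 * t * a + t^2 * c \<le> 0"
  shows "a = 0"
proof (rule ccontr)
  assume a: "a \<noteq> 0"
  define d where "d = \<bar>c\<bar> + 1"
  have d: "d > 0" "2 * d + c > 0" unfolding d_def by (auto simp: abs_if)
  define t where "t = a / d"
  have "2 * t * a + t^2 * c = a^2 * (2 * d + c) / d^2"
    unfolding t_def using d by (simp add: field_simps power2_eq_square)
  moreover have "a^2 * (2 * d + c) / d^2 > 0"
    using a d by (intro divide_pos_pos mult_pos_pos) auto
  ultimately show False using assms[of t] by simp
qed

lemma schur:
  assumes lin: "linear T" and eq: "\<And>Y Z. T (br Y Z) = br Y (T Z)"
  shows "\<exists>c. \<forall>Z. T Z = c *\<^sub>R Z"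
proof -
  have Tl: "br (T X) Z = T (br X Z)" for X Z
  proof -
    have "br (T X) Z = - br Z (T X)" by (rule anti)
    also have "\<dots> = - T (br Z X)" by (simp add: eq)
    also have "br Z X = - br X Z" by (rule anti)
    finally show ?thesis by (simp add: linear_neg[OF lin])
  qed
  have Tsym: "K (T X) Y = K X (T Y)" for X Y
    unfolding K_def killing_trc Tl eq by simp
  define q where "q X = K (T X) X" for X
  define n where "n X = K X X" for X
  have npos: "X \<noteq> 0 \<Longrightarrow> n X > 0" for X unfolding n_def by (rule K_pos)
  have contq: "continuous_on S q" for S
    unfolding q_def K_def
    by (intro continuous_intros bilinear_continuous_on_compose[OF _ _ killing_bil]
        linear_continuous_on[OF lin[unfolded linear_conv_bounded_linear]] continuous_on_id)
  have contn: "continuous_on S n" for S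
    unfolding n_def K_def
    by (intro continuous_intros bilinear_continuous_on_compose[OF _ _ killing_bil] continuous_on_id)
  have "continuous_on (sphere (0::'v) 1) (\<lambda>X. q X / n X)"
    by (intro continuous_intros contq contn) (auto intro!: npos[THEN less_imp_neq, symmetric])
  moreover have "sphere (0::'v) 1 \<noteq> {}" by simp
  ultimately obtain X0 where X0: "X0 \<in> sphere 0 1" and mx: "\<And>Y. Y \<in> sphere 0 1 \<Longrightarrow> q Y / n Y \<le> q X0 / n X0"
    using continuous_attains_sup[OF compact_sphere] by blast
  define l where "l = q X0 / n X0"
  have X0nz: "X0 \<noteq> 0" using X0 by auto
  have qhom: "q (c *\<^sub>R X) = c^2 * q X" for c X
    unfolding q_def using linear_scale[OF lin] bilinear_lmul[OF K_bil] bilinear_rmul[OF K_bil]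
    by (simp add: power2_eq_square)
  have nhom: "n (c *\<^sub>R X) = c^2 * n X" for c X
    unfolding n_def using bilinear_lmul[OF K_bil] bilinear_rmul[OF K_bil]
    by (simp add: power2_eq_square)
  have bound: "q Z \<le> l * n Z" for Z
  proof (cases "Z = 0")
    case True then show ?thesis unfolding q_def n_def
      using bilinear_lzero[OF K_bil] linear_0[OF lin] by simp
  next
    case False
    define c where "c = inverse (norm Z)"
    have cpos: "c > 0" using False unfolding c_def by simp
    have "c *\<^sub>R Z \<in> sphere 0 1" using False unfolding c_def by (simp add: norm_scaleR)
    then have "q (c *\<^sub>R Z) / n (c *\<^sub>R Z) \<le> l" using mx unfolding l_def by blast
    then have "q Z / n Z \<le> l" unfolding qhom nhom using cpos by simp
    then show ?thesis using npos[OF False] by (simp add: divide_le_eq)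
  qed
  have ql: "q X0 = l * n X0" unfolding l_def using npos[OF X0nz] by simp
  define D where "D = T X0 - l *\<^sub>R X0"
  have KD: "K (T X0) D - l * K X0 D = n D"
    unfolding n_def D_def using bilinear_lsub[OF K_bil] bilinear_lmul[OF K_bil] by simp
  have "2 * t * n D + t^2 * (q D - l * n D) \<le> 0" for t
  proof -
    have eq1: "q (X0 + t *\<^sub>R D) = q X0 + t * (2 * K (T X0) D) + t^2 * q D"
      unfolding q_def using linear_add[OF lin] linear_scale[OF lin]
        bilinear_ladd[OF K_bil] bilinear_radd[OF K_bil] bilinear_lmul[OF K_bil] bilinear_rmul[OF K_bil]
        Tsym[of D X0] K_sym[of X0 "T D"] K_sym[of "T X0" D]
      by (simp add: power2_eq_square algebra_simps)
    have eq2: "n (X0 + t *\<^sub>R D) = n X0 + t * (2 * K X0 D) + t^2 * n D"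
      unfolding n_def using
        bilinear_ladd[OF K_bil] bilinear_radd[OF K_bil] bilinear_lmul[OF K_bil] bilinear_rmul[OF K_bil]
        K_sym[of X0 D]
      by (simp add: power2_eq_square algebra_simps)
    have "q (X0 + t *\<^sub>R D) \<le> l * n (X0 + t *\<^sub>R D)" by (rule bound)
    then have "2 * t * (K (T X0) D - l * K X0 D) + t^2 * (q D - l * n D) \<le> 0"
      unfolding eq1 eq2 using ql by (simp add: algebra_simps)
    then show ?thesis unfolding KD .
  qed
  then have "n D = 0" by (rule real_quad_zero)
  then have D0: "D = 0" using npos by force
  then have TX0: "T X0 = l *\<^sub>R X0" unfolding D_def by simp
  define I where "I = {Z. T Z = l *\<^sub>R Z}"
  have sub: "subspace I" unfolding I_def subspace_def
    by (auto simp: linear_add[OF lin] linear_scale[OF lin] linear_0[OF lin] scaleR_add_right)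
  have idl: "\<forall>X\<in>I. \<forall>Y. br Y X \<in> I" unfolding I_def by (auto simp: eq bscale)
  have "I \<noteq> {0}" using TX0 X0nz unfolding I_def by blast
  then have "I = UNIV" using simple[OF sub idl] by blast
  then show ?thesis unfolding I_def by blast
qed

end



definition Pmu :: "nat \<Rightarrow> (nat \<Rightarrow> real) \<Rightarrow> (nat \<Rightarrow> 'v::real_vector) set" where
  "Pmu m \<mu> = {X \<in> gset m. (\<Sum>r\<in>{1..m}. \<mu> r *\<^sub>R X r) = 0}"

lemma hsetD: "X \<in> hset m \<Longrightarrow> \<exists>Z. (\<forall>i\<in>{1..m}. X i = Z) \<and> (\<forall>i. i \<notin> {1..m} \<longrightarrow> X i = 0)"
  unfolding hset_def gset_def by blast

lemma complement_unique:
  assumes c: "is_complement_h m P" and Y1: "Y1 \<in> P" "(\<lambda>i. V i - Y1 i) \<in> hset m"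
    and Y2: "Y2 \<in> P" "(\<lambda>i. V i - Y2 i) \<in> hset m"
  shows "Y1 = Y2"
proof -
  have sg: "is_subspace_g m P" and int: "P \<inter> hset m = {\<lambda>i. 0}" using c unfolding is_complement_h_def by auto
  have add: "\<And>X Y. X\<in>P \<Longrightarrow> Y\<in>P \<Longrightarrow> (\<lambda>i. X i + Y i) \<in> P"
    and scl: "\<And>c X. X \<in> P \<Longrightarrow> (\<lambda>i. c *\<^sub>R X i) \<in> P"
    using sg unfolding is_subspace_g_def by auto
  have "(\<lambda>i. Y1 i + (-1) *\<^sub>R Y2 i) \<in> P" by (rule add[OF Y1(1) scl[OF Y2(1)]])
  then have inP: "(\<lambda>i. Y1 i - Y2 i) \<in> P" by simp
  obtain Z1 where Z1: "\<forall>i\<in>{1..m}. V i - Y1 i = Z1" "\<forall>i. i \<notin> {1..m} \<longrightarrow> V i - Y1 i = 0"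
    using hsetD[OF Y1(2)] by auto
  obtain Z2 where Z2: "\<forall>i\<in>{1..m}. V i - Y2 i = Z2" "\<forall>i. i \<notin> {1..m} \<longrightarrow> V i - Y2 i = 0"
    using hsetD[OF Y2(2)] by auto
  have "(\<lambda>i. Y1 i - Y2 i) \<in> hset m"
    unfolding hset_def gset_def
  proof (intro CollectI conjI allI impI exI ballI)
    fix i assume i: "i \<notin> {1..m}"
    have "Y1 i - Y2 i = (V i - Y2 i) - (V i - Y1 i)" by (simp add: algebra_simps)
    then show "Y1 i - Y2 i = 0" using Z1(2) Z2(2) i by simp
  next
    fix i assume i: "i \<in> {1..m}"
    have "Y1 i - Y2 i = (V i - Y2 i) - (V i - Y1 i)" by (simp add: algebra_simps)
    moreover have "V i - Y1 i = Z1" "V i - Y2 i = Z2" using Z1(1) Z2(1) i by auto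
    ultimately show "Y1 i - Y2 i = Z2 - Z1" by simp
  qed
  then have "(\<lambda>i. Y1 i - Y2 i) = (\<lambda>i. 0)" using inP int by blast
  then show ?thesis by (intro ext) (metis right_minus_eq)
qed

lemma proj_p_char:
  assumes c: "is_complement_h m P" and "Y \<in> P" "(\<lambda>i. V i - Y i) \<in> hset m"
  shows "proj_p m P V = Y"
  unfolding proj_p_def
  by (rule the_equality) (use assms complement_unique[OF c] in auto)

lemma proj_p_ex:
  assumes c: "is_complement_h m P" and V: "V \<in> gset m"
  shows "proj_p m P V \<in> P \<and> (\<lambda>i. V i - proj_p m P V i) \<in> hset m"
proof -
  obtain Y W where Y: "Y \<in> P" "W \<in> hset m" "V = (\<lambda>i. Y i + W i)"
    using c V unfolding is_complement_h_def by blast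
  have "(\<lambda>i. V i - Y i) = W" using Y(3) by auto
  then have "proj_p m P V = Y" using proj_p_char[OF c Y(1)] Y(2) by simp
  then show ?thesis using Y \<open>(\<lambda>i. V i - Y i) = W\<close> by simp
qed

lemma proj_gm_h:
  assumes "m \<ge> 1" "(\<lambda>i. V i - Y i) \<in> hset m"
  shows "proj_gm m Y = proj_gm m V"
proof -
  obtain Z where Z: "\<forall>i\<in>{1..m}. V i - Y i = Z" using hsetD[OF assms(2)] by auto
  have "Y i - Y m = V i - V m" if "i \<in> {1..<m}" for i
  proof -
    have "V i - Y i = Z" "V m - Y m = Z" using Z that assms(1) by auto
    have "Y i - Y m = (V i - V m) - ((V i - Y i) - (V m - Y m))" by (simp add: algebra_simps)
    then show ?thesis using \<open>V i - Y i = Z\<close> \<open>V m - Y m = Z\<close> by simp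
  qed
  then show ?thesis unfolding proj_gm_def by auto
qed

lemma Pmu_complement:
  fixes \<mu> :: "nat \<Rightarrow> real"
  assumes S: "(\<Sum>r\<in>{1..m}. \<mu> r) \<noteq> 0"
  shows "is_complement_h m (Pmu m \<mu> :: (nat \<Rightarrow> 'v::real_vector) set)"
  unfolding is_complement_h_def
proof (intro conjI)
  show "is_subspace_g m (Pmu m \<mu> :: (nat \<Rightarrow> 'v) set)"
    unfolding is_subspace_g_def
  proof (intro conjI ballI allI)
    show "Pmu m \<mu> \<subseteq> gset m" unfolding Pmu_def by auto
    show "(\<lambda>i. 0) \<in> (Pmu m \<mu> :: (nat \<Rightarrow> 'v) set)" unfolding Pmu_def gset_def by auto
    fix X Y :: "nat \<Rightarrow> 'v" assume X: "X \<in> Pmu m \<mu>"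
    {
      assume Y: "Y \<in> Pmu m \<mu>"
      have "(\<Sum>r\<in>{1..m}. \<mu> r *\<^sub>R (X r + Y r)) = (\<Sum>r\<in>{1..m}. \<mu> r *\<^sub>R X r) + (\<Sum>r\<in>{1..m}. \<mu> r *\<^sub>R Y r)"
        by (simp add: scaleR_add_right sum.distrib)
      then show "(\<lambda>i. X i + Y i) \<in> Pmu m \<mu>" using X Y unfolding Pmu_def gset_def by auto
    }
    fix c :: real
    have "(\<Sum>r\<in>{1..m}. \<mu> r *\<^sub>R (c *\<^sub>R X r)) = c *\<^sub>R (\<Sum>r\<in>{1..m}. \<mu> r *\<^sub>R X r)"
      by (simp add: scaleR_sum_right mult.commute)
    then show "(\<lambda>i. c *\<^sub>R X i) \<in> Pmu m \<mu>" using X unfolding Pmu_def gset_def by auto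
  qed
  show "(Pmu m \<mu> :: (nat \<Rightarrow> 'v) set) \<inter> hset m = {\<lambda>i. 0}"
  proof
    show "{\<lambda>i. 0} \<subseteq> (Pmu m \<mu> :: (nat \<Rightarrow> 'v) set) \<inter> hset m"
      unfolding Pmu_def hset_def gset_def by auto
    show "(Pmu m \<mu> :: (nat \<Rightarrow> 'v) set) \<inter> hset m \<subseteq> {\<lambda>i. 0}"
    proof
      fix X :: "nat \<Rightarrow> 'v" assume X: "X \<in> Pmu m \<mu> \<inter> hset m"
      obtain Z where Z: "\<forall>i\<in>{1..m}. X i = Z" "\<forall>i. i \<notin> {1..m} \<longrightarrow> X i = 0"
        using X hsetD by blast
      have "0 = (\<Sum>r\<in>{1..m}. \<mu> r *\<^sub>R X r)" using X unfolding Pmu_def by auto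
      also have "\<dots> = (\<Sum>r\<in>{1..m}. \<mu> r *\<^sub>R Z)" using Z by (intro sum.cong) auto
      also have "\<dots> = (\<Sum>r\<in>{1..m}. \<mu> r) *\<^sub>R Z" by (simp add: scaleR_sum_left)
      finally have "Z = 0" using S by simp
      then have "X = (\<lambda>i. 0)" using Z by (intro ext) (metis)
      then show "X \<in> {\<lambda>i. 0}" by simp
    qed
  qed
  show "\<forall>X\<in>gset m. \<exists>Y\<in>(Pmu m \<mu> :: (nat \<Rightarrow> 'v) set). \<exists>W\<in>hset m. X = (\<lambda>i. Y i + W i)"
  proof
    fix X :: "nat \<Rightarrow> 'v" assume X: "X \<in> gset m"
    define s where "s = inverse (\<Sum>r\<in>{1..m}. \<mu> r) *\<^sub>R (\<Sum>r\<in>{1..m}. \<mu> r *\<^sub>R X r)"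
    define W where "W = (\<lambda>i. if i \<in> {1..m} then s else (0::'v))"
    define Y where "Y = (\<lambda>i. X i - W i)"
    have W: "W \<in> hset m" unfolding W_def hset_def gset_def by auto
    have "(\<Sum>r\<in>{1..m}. \<mu> r *\<^sub>R Y r) = (\<Sum>r\<in>{1..m}. \<mu> r *\<^sub>R X r - \<mu> r *\<^sub>R s)"
      unfolding Y_def W_def by (intro sum.cong) (auto simp: scaleR_diff_right)
    also have "\<dots> = (\<Sum>r\<in>{1..m}. \<mu> r *\<^sub>R X r) - (\<Sum>r\<in>{1..m}. \<mu> r) *\<^sub>R s"
      by (simp add: sum_subtractf scaleR_sum_left)
    also have "\<dots> = 0" unfolding s_def using S by simp
    finally have "Y \<in> Pmu m \<mu>" using X unfolding Pmu_def gset_def Y_def W_def by auto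
    moreover have "X = (\<lambda>i. Y i + W i)" unfolding Y_def by simp
    ultimately show "\<exists>Y\<in>(Pmu m \<mu> :: (nat \<Rightarrow> 'v) set). \<exists>W\<in>hset m. X = (\<lambda>i. Y i + W i)"
      using W by blast
  qed
qed

context CSL
begin

lemma Pmu_inv: "h_invariant br m (Pmu m \<mu>)"
  unfolding h_invariant_def
proof (intro ballI)
  fix W X :: "nat \<Rightarrow> 'v" assume W: "W \<in> hset m" and X: "X \<in> Pmu m \<mu>"
  obtain Z where Z: "\<forall>i\<in>{1..m}. W i = Z" "\<forall>i. i \<notin> {1..m} \<longrightarrow> W i = 0" using hsetD[OF W] by auto
  have "(\<Sum>r\<in>{1..m}. \<mu> r *\<^sub>R br (W r) (X r)) = (\<Sum>r\<in>{1..m}. br Z (\<mu> r *\<^sub>R X r))"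
    using Z by (intro sum.cong) (auto simp: bscale)
  also have "\<dots> = br Z (\<Sum>r\<in>{1..m}. \<mu> r *\<^sub>R X r)"
    by (simp add: linear_sum[OF lr] o_def)
  also have "\<dots> = 0" using X unfolding Pmu_def by (simp add: bzero)
  finally show "gbr br W X \<in> Pmu m \<mu>"
    using X Z unfolding Pmu_def gset_def gbr_def by (auto simp: bzero)
qed

lemma nr_from:
  assumes m: "m \<ge> 2" and S: "(\<Sum>r\<in>{1..m}. \<mu> r) \<noteq> 0"
    and H: "\<And>X Y. X \<in> Pmu m \<mu> \<Longrightarrow> Y \<in> Pmu m \<mu> \<Longrightarrow>
       (\<Sum>i\<in>{1..<m}. \<Sum>j\<in>{1..<m}. a i j * K (br (X i) (Y i) - br (X m) (Y m)) (X j - X m)) = 0"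
  shows "naturally_reductive br a m"
  unfolding naturally_reductive_def
proof (intro exI conjI ballI)
  let ?P = "Pmu m \<mu> :: (nat \<Rightarrow> 'v) set"
  show c: "is_complement_h m ?P" by (rule Pmu_complement[OF S])
  show "h_invariant br m ?P" by (rule Pmu_inv)
  fix X Y assume X: "X \<in> ?P" and Y: "Y \<in> ?P"
  have V: "gbr br X Y \<in> gset m" using X Y unfolding Pmu_def gset_def gbr_def by (auto simp: bzero)
  have "proj_gm m (proj_p m ?P (gbr br X Y)) = proj_gm m (gbr br X Y)"
    using proj_p_ex[OF c V] m by (intro proj_gm_h) auto
  moreover have "Qform br a m (proj_gm m (gbr br X Y)) (proj_gm m X) =
     (\<Sum>i\<in>{1..<m}. \<Sum>j\<in>{1..<m}. a i j * K (br (X i) (Y i) - br (X m) (Y m)) (X j - X m))"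
    unfolding Qform_def proj_gm_def gbr_def K_def by (intro sum.cong refl) auto
  ultimately show "Qform br a m (proj_gm m (proj_p m ?P (gbr br X Y))) (proj_gm m X) = 0"
    using H[OF X Y] by simp
qed

end



lemma star_sum:
  fixes a F :: "nat \<Rightarrow> nat \<Rightarrow> real"
  assumes fin: "finite I" and k: "k \<in> I"
    and sym: "\<forall>i\<in>I. \<forall>j\<in>I. a i j = a j i"
    and ak: "\<forall>i\<in>I. i \<noteq> k \<longrightarrow> a i k = - a i i"
    and a0: "\<forall>i\<in>I. \<forall>j\<in>I. i \<noteq> j \<and> i \<noteq> k \<and> j \<noteq> k \<longrightarrow> a i j = 0"
  shows "(\<Sum>i\<in>I. \<Sum>j\<in>I. a i j * F i j) =
    (\<Sum>i\<in>I-{k}. a i i * (F i i - F i k - F k i)) + a k k * F k k"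
proof -
  have inner: "(\<Sum>j\<in>I. a i j * F i j) = a i i * F i i - a i i * F i k" if i: "i \<in> I - {k}" for i
  proof -
    have "(\<Sum>j\<in>I. a i j * F i j) = a i k * F i k + (\<Sum>j\<in>I-{k}. a i j * F i j)"
      by (rule sum.remove[OF fin k])
    also have "(\<Sum>j\<in>I-{k}. a i j * F i j) = a i i * F i i + (\<Sum>j\<in>I-{k}-{i}. a i j * F i j)"
      using fin i by (intro sum.remove) auto
    also have "(\<Sum>j\<in>I-{k}-{i}. a i j * F i j) = 0"
      using a0 i by (intro sum.neutral) auto
    finally show ?thesis using ak i by simp
  qed
  have innerk: "(\<Sum>j\<in>I. a k j * F k j) = a k k * F k k - (\<Sum>j\<in>I-{k}. a j j * F k j)"
  proof -
    have "(\<Sum>j\<in>I. a k j * F k j) = a k k * F k k + (\<Sum>j\<in>I-{k}. a k j * F k j)"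
      by (rule sum.remove[OF fin k])
    also have "(\<Sum>j\<in>I-{k}. a k j * F k j) = (\<Sum>j\<in>I-{k}. - (a j j * F k j))"
      using ak sym k by (intro sum.cong) auto
    finally show ?thesis by (simp add: sum_negf)
  qed
  have "(\<Sum>i\<in>I. \<Sum>j\<in>I. a i j * F i j) = (\<Sum>j\<in>I. a k j * F k j) + (\<Sum>i\<in>I-{k}. \<Sum>j\<in>I. a i j * F i j)"
    by (rule sum.remove[OF fin k])
  also have "(\<Sum>i\<in>I-{k}. \<Sum>j\<in>I. a i j * F i j) = (\<Sum>i\<in>I-{k}. a i i * F i i - a i i * F i k)"
    using inner by (intro sum.cong) auto
  finally show ?thesis unfolding innerk
    by (simp add: sum_subtractf algebra_simps sum.distrib)
qed

lemma caseA_real: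
  fixes a k :: "nat \<Rightarrow> nat \<Rightarrow> real"
  assumes "\<forall>i\<in>{1..<m}. \<forall>j\<in>{1..<m}. i \<noteq> j \<longrightarrow> a i j = 0"
    and "\<forall>i. k i i = 0" and "\<forall>i. k i m = 0" and "\<forall>j. k m j = 0"
  shows "(\<Sum>i\<in>{1..<m}. \<Sum>j\<in>{1..<m}. a i j * (k i j - k i m - k m j + k m m)) = 0"
proof (intro sum.neutral ballI)
  fix i j assume "i \<in> {1..<m}" "j \<in> {1..<m}"
  then show "a i j * (k i j - k i m - k m j + k m m) = 0" using assms by (cases "i = j") auto
qed

lemma caseB_real:
  fixes a k :: "nat \<Rightarrow> nat \<Rightarrow> real"
  assumes kk: "kk \<in> {1..<m}"
    and sym: "\<forall>i\<in>{1..<m}. \<forall>j\<in>{1..<m}. a i j = a j i"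
    and ak: "\<forall>i\<in>{1..<m}. i \<noteq> kk \<longrightarrow> - a i kk = a i i"
    and a0: "\<forall>i\<in>{1..<m}. \<forall>j\<in>{1..<m}. i \<noteq> j \<and> i \<noteq> kk \<and> j \<noteq> kk \<longrightarrow> a i j = 0"
    and d: "\<forall>i. k i i = 0" and c: "\<forall>i. k i kk = 0" and r: "\<forall>j. k kk j = 0"
  shows "(\<Sum>i\<in>{1..<m}. \<Sum>j\<in>{1..<m}. a i j * (k i j - k i m - k m j + k m m)) = 0"
proof -
  have "(\<Sum>i\<in>{1..<m}. \<Sum>j\<in>{1..<m}. a i j * (k i j - k i m - k m j + k m m)) =
    (\<Sum>i\<in>{1..<m}-{kk}. a i i * ((k i i - k i m - k m i + k m m) - (k i kk - k i m - k m kk + k m m)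
       - (k kk i - k kk m - k m i + k m m))) + a kk kk * (k kk kk - k kk m - k m kk + k m m)"
    using ak by (intro star_sum[OF _ kk sym _ a0]) auto
  also have "\<dots> = 0" using d c r by simp
  finally show ?thesis .
qed

lemma caseC_real:
  fixes al :: "nat \<Rightarrow> real" and k :: "nat \<Rightarrow> nat \<Rightarrow> real"
  assumes m: "m \<ge> 1" and S: "(\<Sum>l\<in>{1..m}. al l) \<noteq> 0"
    and d: "\<forall>i. k i i = 0"
    and row: "\<forall>i\<in>{1..m}. (\<Sum>j\<in>{1..m}. al j * k i j) = 0"
  shows "(\<Sum>i\<in>{1..<m}. \<Sum>j\<in>{1..<m}.
     ((if i = j then al i else 0) - al i * al j / (\<Sum>l\<in>{1..m}. al l)) * (k i j - k i m - k m j + k m m)) = 0"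
proof -
  define S where "S = (\<Sum>l\<in>{1..m}. al l)"
  define J where "J = {1..<m}"
  have fin: "finite J" unfolding J_def by simp
  have mJ: "m \<notin> J" unfolding J_def by simp
  have IJ: "{1..m} = insert m J" unfolding J_def using m by auto
  have SJ: "(\<Sum>l\<in>J. al l) = S - al m" unfolding S_def IJ using fin mJ by simp
  have rowJ: "(\<Sum>j\<in>J. al j * k i j) = - (al m * k i m)" if "i \<in> insert m J" for i
  proof -
    have "(\<Sum>j\<in>insert m J. al j * k i j) = 0" using row that unfolding IJ by blast
    then show ?thesis using fin mJ by simp
  qed
  define A where "A = (\<Sum>i\<in>J. al i * k i m)"
  have part1: "(\<Sum>i\<in>J. \<Sum>j\<in>J. (if i = j then al i else 0) * (k i j - k i m - k m j + k m m)) = - A"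
  proof -
    have "(\<Sum>i\<in>J. \<Sum>j\<in>J. (if i = j then al i else 0) * (k i j - k i m - k m j + k m m))
       = (\<Sum>i\<in>J. al i * (k i i - k i m - k m i + k m m))"
    proof (intro sum.cong refl)
      fix i assume i: "i \<in> J"
      have "(\<Sum>j\<in>J. (if i = j then al i else 0) * (k i j - k i m - k m j + k m m)) =
        (\<Sum>j\<in>J. if j = i then al i * (k i j - k i m - k m j + k m m) else 0)"
        by (intro sum.cong) auto
      also have "\<dots> = al i * (k i i - k i m - k m i + k m m)" using fin i by simp
      finally show "(\<Sum>j\<in>J. (if i = j then al i else 0) * (k i j - k i m - k m j + k m m)) =
        al i * (k i i - k i m - k m i + k m m)" .
    qed
    also have "\<dots> = - (\<Sum>i\<in>J. al i * k i m) - (\<Sum>i\<in>J. al i * k m i)"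
      using d by (simp add: algebra_simps sum.distrib sum_subtractf sum_negf)
    also have "(\<Sum>i\<in>J. al i * k m i) = 0" using rowJ[of m] d by (simp add: mult.commute)
    finally show ?thesis unfolding A_def by simp
  qed
  have part2: "(\<Sum>i\<in>J. \<Sum>j\<in>J. al i * al j * (k i j - k i m - k m j + k m m)) = - S * A"
  proof -
    have e: "(\<Sum>j\<in>J. al i * al j * (k i j - k i m - k m j + k m m)) =
       al i * (\<Sum>j\<in>J. al j * k i j) - al i * k i m * (\<Sum>j\<in>J. al j) - al i * (\<Sum>j\<in>J. al j * k m j)" for i
      using d by (simp add: algebra_simps sum.distrib sum_subtractf sum_distrib_left sum_distrib_right)
    have "(\<Sum>i\<in>J. \<Sum>j\<in>J. al i * al j * (k i j - k i m - k m j + k m m)) =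
       (\<Sum>i\<in>J. al i * (- (al m * k i m)) - al i * k i m * (S - al m) - al i * (- (al m * k m m)))"
      unfolding e using rowJ SJ by (intro sum.cong refl) auto
    also have "\<dots> = - S * A" unfolding A_def using d
      by (simp add: algebra_simps sum.distrib sum_subtractf sum_distrib_left)
    finally show ?thesis .
  qed
  have "(\<Sum>i\<in>J. \<Sum>j\<in>J. ((if i = j then al i else 0) - al i * al j / S) * (k i j - k i m - k m j + k m m))
     = (\<Sum>i\<in>J. \<Sum>j\<in>J. (if i = j then al i else 0) * (k i j - k i m - k m j + k m m))
       - (\<Sum>i\<in>J. \<Sum>j\<in>J. al i * al j * (k i j - k i m - k m j + k m m)) / S"
    by (simp add: left_diff_distrib sum_subtractf sum_divide_distrib)
  also have "\<dots> = 0" unfolding part1 part2 using S unfolding S_def by simp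
  finally show ?thesis unfolding S_def J_def .
qed




context CSL begin

lemma K_lin2: "linear (\<lambda>y. K x y)" using K_bil unfolding bilinear_def by blast

lemma Pmu_k:
  assumes X: "X \<in> Pmu m \<mu>"
  shows "(\<Sum>j\<in>{1..m}. \<mu> j * K U (X j)) = 0"
proof -
  have "(\<Sum>j\<in>{1..m}. \<mu> j * K U (X j)) = K U (\<Sum>j\<in>{1..m}. \<mu> j *\<^sub>R X j)"
    by (simp add: linear_sum[OF K_lin2] o_def linear_scale[OF K_lin2])
  also have "\<dots> = 0" using X unfolding Pmu_def by (simp add: bilinear_rzero[OF K_bil])
  finally show ?thesis .
qed

lemma K_expand: "K (A - B) (C - D) = K A C - K A D - K B C + K B D"
  using bilinear_lsub[OF K_bil] bilinear_rsub[OF K_bil] by simp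

lemma Pmu_e: "X \<in> Pmu m (\<lambda>r. if r = kk then 1 else 0) \<Longrightarrow> kk \<in> {1..m} \<Longrightarrow> X kk = 0"
proof -
  assume X: "X \<in> Pmu m (\<lambda>r. if r = kk then 1 else 0)" and kk: "kk \<in> {1..m}"
  have "(\<Sum>r\<in>{1..m}. (if r = kk then 1 else 0) *\<^sub>R X r) = (\<Sum>r\<in>{1..m}. if r = kk then X r else 0)"
    by (intro sum.cong) auto
  also have "\<dots> = X kk" using kk by (subst sum.delta) auto
  finally show ?thesis using X unfolding Pmu_def by simp
qed

lemma sum_e: "(kk::nat) \<in> {1..m} \<Longrightarrow> (\<Sum>r\<in>{1..m}. (if r = kk then 1 else 0::real)) = 1"
  by (subst sum.delta) auto

lemma if_a:
  assumes m: "m \<ge> 2"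
    and a0: "\<forall>i\<in>{1..<m}. \<forall>j\<in>{1..<m}. i \<noteq> j \<longrightarrow> a i j = 0"
  shows "naturally_reductive br a m"
proof (rule nr_from[OF m, of "\<lambda>r. if r = m then 1 else 0"])
  show "(\<Sum>r\<in>{1..m}. (if r = m then 1 else 0::real)) \<noteq> 0" using m sum_e[of m m] by simp
  fix X Y :: "nat \<Rightarrow> 'v" assume X: "X \<in> Pmu m (\<lambda>r. if r = m then 1 else 0)"
  have Xm: "X m = 0" using Pmu_e[OF X] m by simp
  define k where "k i j = K (br (X i) (Y i)) (X j)" for i j
  have "(\<Sum>i\<in>{1..<m}. \<Sum>j\<in>{1..<m}. a i j * K (br (X i) (Y i) - br (X m) (Y m)) (X j - X m))
    = (\<Sum>i\<in>{1..<m}. \<Sum>j\<in>{1..<m}. a i j * (k i j - k i m - k m j + k m m))"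
    unfolding k_def K_expand by simp
  also have "\<dots> = 0"
    by (rule caseA_real[OF a0]) (auto simp: k_def K_alt Xm bzero bilinear_rzero[OF K_bil] bilinear_lzero[OF K_bil])
  finally show "(\<Sum>i\<in>{1..<m}. \<Sum>j\<in>{1..<m}. a i j * K (br (X i) (Y i) - br (X m) (Y m)) (X j - X m)) = 0" .
qed

lemma if_b:
  assumes m: "m \<ge> 2" and kk: "kk \<in> {1..<m}"
    and sym: "\<forall>i\<in>{1..<m}. \<forall>j\<in>{1..<m}. a i j = a j i"
    and ak: "\<forall>i\<in>{1..<m}. i \<noteq> kk \<longrightarrow> - a i kk = a i i"
    and a0: "\<forall>i\<in>{1..<m}. \<forall>j\<in>{1..<m}. i \<noteq> j \<and> i \<noteq> kk \<and> j \<noteq> kk \<longrightarrow> a i j = 0"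
  shows "naturally_reductive br a m"
proof (rule nr_from[OF m, of "\<lambda>r. if r = kk then 1 else 0"])
  have kk': "kk \<in> {1..m}" using kk by auto
  show "(\<Sum>r\<in>{1..m}. (if r = kk then 1 else 0::real)) \<noteq> 0" using kk' sum_e[OF kk'] by simp
  fix X Y :: "nat \<Rightarrow> 'v" assume X: "X \<in> Pmu m (\<lambda>r. if r = kk then 1 else 0)"
  have Xk: "X kk = 0" using Pmu_e[OF X kk'] .
  define k where "k i j = K (br (X i) (Y i)) (X j)" for i j
  have "(\<Sum>i\<in>{1..<m}. \<Sum>j\<in>{1..<m}. a i j * K (br (X i) (Y i) - br (X m) (Y m)) (X j - X m))
    = (\<Sum>i\<in>{1..<m}. \<Sum>j\<in>{1..<m}. a i j * (k i j - k i m - k m j + k m m))"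
    unfolding k_def K_expand by simp
  also have "\<dots> = 0"
    by (rule caseB_real[OF kk sym ak a0]) (auto simp: k_def K_alt Xk bzero bilinear_rzero[OF K_bil] bilinear_lzero[OF K_bil])
  finally show "(\<Sum>i\<in>{1..<m}. \<Sum>j\<in>{1..<m}. a i j * K (br (X i) (Y i) - br (X m) (Y m)) (X j - X m)) = 0" .
qed

lemma if_c:
  assumes m: "m \<ge> 2" and S: "(\<Sum>l\<in>{1..m}. al l) \<noteq> 0"
    and af: "\<forall>i\<in>{1..<m}. \<forall>j\<in>{1..<m}.
                a i j = (if i = j then al i else 0) - al i * al j / (\<Sum>l\<in>{1..m}. al l)"
  shows "naturally_reductive br a m"
proof (rule nr_from[OF m S])
  fix X Y :: "nat \<Rightarrow> 'v" assume X: "X \<in> Pmu m al"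
  define k where "k i j = K (br (X i) (Y i)) (X j)" for i j
  have "(\<Sum>i\<in>{1..<m}. \<Sum>j\<in>{1..<m}. a i j * K (br (X i) (Y i) - br (X m) (Y m)) (X j - X m))
    = (\<Sum>i\<in>{1..<m}. \<Sum>j\<in>{1..<m}. ((if i = j then al i else 0) - al i * al j / (\<Sum>l\<in>{1..m}. al l)) * (k i j - k i m - k m j + k m m))"
    unfolding k_def K_expand using af by (intro sum.cong refl) auto
  also have "\<dots> = 0"
  proof (rule caseC_real)
    show "\<forall>i\<in>{1..m}. (\<Sum>j\<in>{1..m}. al j * k i j) = 0" unfolding k_def using Pmu_k[OF X] by blast
  qed (use m S in \<open>auto simp: k_def K_alt\<close>)
  finally show "(\<Sum>i\<in>{1..<m}. \<Sum>j\<in>{1..<m}. a i j * K (br (X i) (Y i) - br (X m) (Y m)) (X j - X m)) = 0" .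
qed

end



definition Tf :: "(nat \<Rightarrow> nat \<Rightarrow> real) \<Rightarrow> nat \<Rightarrow> (nat \<Rightarrow> real) \<Rightarrow> (nat \<Rightarrow> real) \<Rightarrow> (nat \<Rightarrow> real) \<Rightarrow> real" where
  "Tf a m u w v = (\<Sum>i\<in>{1..<m}. \<Sum>j\<in>{1..<m}. a i j * (u i * w i - u m * w m) * (v j - v m))"

definition Vc :: "(nat \<Rightarrow> real) \<Rightarrow> nat \<Rightarrow> (nat \<Rightarrow> real) \<Rightarrow> bool" where
  "Vc cc m v \<longleftrightarrow> v m = (\<Sum>i\<in>{1..<m}. cc i * (v i - v m))"

lemma subspace_g_sum:
  assumes sg: "is_subspace_g m P" and fin: "finite S"
  shows "(\<forall>i\<in>S. f i \<in> P) \<Longrightarrow> (\<lambda>r. \<Sum>i\<in>S. f i r) \<in> P"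
  using fin
proof (induction S rule: finite_induct)
  case empty then show ?case using sg unfolding is_subspace_g_def by simp
next
  case (insert x F)
  have add: "\<And>X Y. X\<in>P \<Longrightarrow> Y\<in>P \<Longrightarrow> (\<lambda>i. X i + Y i) \<in> P"
    using sg unfolding is_subspace_g_def by auto
  have "(\<lambda>r. f x r + (\<Sum>i\<in>F. f i r)) \<in> P"
    using insert by (intro add) auto
  then show ?case using insert by simp
qed

context CSL begin

definition E :: "nat \<Rightarrow> 'v \<Rightarrow> nat \<Rightarrow> 'v" where "E i Z = (\<lambda>r. if r = i then Z else 0)"
definition dg :: "nat \<Rightarrow> 'v \<Rightarrow> nat \<Rightarrow> 'v" where "dg m Z = (\<lambda>r. if r \<in> {1..m} then Z else 0)"

lemma dg_h: "dg m Z \<in> hset m" unfolding dg_def hset_def gset_def by auto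

lemma rep_form:
  assumes c: "is_complement_h m P" and i: "i \<in> {1..<m}"
  shows "proj_p m P (E i Z) = (\<lambda>r. E i Z r + dg m (proj_p m P (E i Z) m) r)"
proof -
  have EZ: "E i Z \<in> gset m" using i unfolding E_def gset_def by auto
  have Y: "proj_p m P (E i Z) \<in> P" and H: "(\<lambda>r. E i Z r - proj_p m P (E i Z) r) \<in> hset m"
    using proj_p_ex[OF c EZ] by auto
  have Pg: "P \<subseteq> gset m" using c unfolding is_complement_h_def is_subspace_g_def by auto
  obtain W where W: "\<forall>r\<in>{1..m}. E i Z r - proj_p m P (E i Z) r = W" using hsetD[OF H] by auto
  have mr: "m \<in> {1..m}" using i by auto
  have Wm: "W = - proj_p m P (E i Z) m"
  proof -
    have "E i Z m - proj_p m P (E i Z) m = W" using W mr by blast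
    moreover have "E i Z m = 0" using i unfolding E_def by auto
    ultimately show ?thesis by simp
  qed
  show ?thesis
  proof
    fix r show "proj_p m P (E i Z) r = E i Z r + dg m (proj_p m P (E i Z) m) r"
    proof (cases "r \<in> {1..m}")
      case True
      then have "E i Z r - proj_p m P (E i Z) r = - proj_p m P (E i Z) m" using W Wm by auto
      then show ?thesis using True unfolding dg_def by (simp add: algebra_simps)
    next
      case False
      have "proj_p m P (E i Z) \<in> gset m" using Y Pg by blast
      then have "proj_p m P (E i Z) r = 0" using False unfolding gset_def by blast
      moreover have "E i Z r = 0" using False i unfolding E_def by auto
      ultimately show ?thesis using False unfolding dg_def by auto
    qed
  qed
qed

definition phi :: "nat \<Rightarrow> (nat \<Rightarrow> 'v) set \<Rightarrow> nat \<Rightarrow> 'v \<Rightarrow> 'v" where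
  "phi m P i Z = proj_p m P (E i Z) m"

definition Rp :: "nat \<Rightarrow> (nat \<Rightarrow> 'v) set \<Rightarrow> nat \<Rightarrow> 'v \<Rightarrow> nat \<Rightarrow> 'v" where
  "Rp m P i Z = (\<lambda>r. E i Z r + dg m (phi m P i Z) r)"

lemma Rp_in:
  assumes c: "is_complement_h m P" and i: "i \<in> {1..<m}"
  shows "Rp m P i Z \<in> P" and "proj_p m P (E i Z) = Rp m P i Z"
proof -
  have EZ: "E i Z \<in> gset m" using i unfolding E_def gset_def by auto
  show "proj_p m P (E i Z) = Rp m P i Z" unfolding Rp_def phi_def by (rule rep_form[OF c i])
  then show "Rp m P i Z \<in> P" using proj_p_ex[OF c EZ] by simp
qed

lemma phi_char:
  assumes c: "is_complement_h m P" and i: "i \<in> {1..<m}" and Y: "Y \<in> P"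
    and H: "(\<lambda>r. E i Z r - Y r) \<in> hset m"
  shows "phi m P i Z = Y m"
  unfolding phi_def using proj_p_char[OF c Y H] by simp

lemma hset_const:
  assumes "\<forall>r\<in>{1..m}. F r = W" "\<forall>r. r \<notin> {1..m} \<longrightarrow> F r = 0"
  shows "F \<in> hset m"
  using assms unfolding hset_def gset_def by auto

lemma phi_linear:
  assumes c: "is_complement_h m P" and i: "i \<in> {1..<m}"
  shows "linear (phi m P i)"
proof (rule linearI)
  have sg: "is_subspace_g m P" using c unfolding is_complement_h_def by auto
  have mr: "m \<in> {1..m}" and im: "i \<noteq> m" using i by auto
  fix Z1 Z2 :: 'v and s :: real
  have in1: "(\<lambda>r. Rp m P i Z1 r + Rp m P i Z2 r) \<in> P"
    using sg Rp_in(1)[OF c i] unfolding is_subspace_g_def by blast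
  have "(\<lambda>r. E i (Z1 + Z2) r - (Rp m P i Z1 r + Rp m P i Z2 r)) \<in> hset m"
  proof (rule hset_const[where W = "- (phi m P i Z1 + phi m P i Z2)"])
    show "\<forall>r\<in>{1..m}. E i (Z1 + Z2) r - (Rp m P i Z1 r + Rp m P i Z2 r) = - (phi m P i Z1 + phi m P i Z2)"
    proof
      fix r assume r: "r \<in> {1..m}"
      show "E i (Z1 + Z2) r - (Rp m P i Z1 r + Rp m P i Z2 r) = - (phi m P i Z1 + phi m P i Z2)"
        using r by (cases "r = i") (simp_all add: E_def Rp_def dg_def)
    qed
    show "\<forall>r. r \<notin> {1..m} \<longrightarrow> E i (Z1 + Z2) r - (Rp m P i Z1 r + Rp m P i Z2 r) = 0"
      using i by (auto simp: E_def Rp_def dg_def)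
  qed
  then have "phi m P i (Z1 + Z2) = Rp m P i Z1 m + Rp m P i Z2 m" using phi_char[OF c i in1] by simp
  then show "phi m P i (Z1 + Z2) = phi m P i Z1 + phi m P i Z2"
    using mr im by (simp add: Rp_def E_def dg_def)
  have in2: "(\<lambda>r. s *\<^sub>R Rp m P i Z1 r) \<in> P"
    using sg Rp_in(1)[OF c i] unfolding is_subspace_g_def by blast
  have "(\<lambda>r. E i (s *\<^sub>R Z1) r - s *\<^sub>R Rp m P i Z1 r) \<in> hset m"
  proof (rule hset_const[where W = "- (s *\<^sub>R phi m P i Z1)"])
    show "\<forall>r\<in>{1..m}. E i (s *\<^sub>R Z1) r - s *\<^sub>R Rp m P i Z1 r = - (s *\<^sub>R phi m P i Z1)"
    proof
      fix r assume r: "r \<in> {1..m}"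
      show "E i (s *\<^sub>R Z1) r - s *\<^sub>R Rp m P i Z1 r = - (s *\<^sub>R phi m P i Z1)"
        using r by (cases "r = i") (simp_all add: E_def Rp_def dg_def scaleR_add_right)
    qed
    show "\<forall>r. r \<notin> {1..m} \<longrightarrow> E i (s *\<^sub>R Z1) r - s *\<^sub>R Rp m P i Z1 r = 0"
      using i by (auto simp: E_def Rp_def dg_def)
  qed
  then have "phi m P i (s *\<^sub>R Z1) = s *\<^sub>R Rp m P i Z1 m" using phi_char[OF c i in2] by simp
  then show "phi m P i (s *\<^sub>R Z1) = s *\<^sub>R phi m P i Z1"
    using mr im by (simp add: Rp_def E_def dg_def)
qed

lemma phi_equiv:
  assumes c: "is_complement_h m P" and inv: "h_invariant br m P" and i: "i \<in> {1..<m}"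
  shows "phi m P i (br W Z) = br W (phi m P i Z)"
proof -
  have mr: "m \<in> {1..m}" and im: "i \<noteq> m" using i by auto
  have in1: "gbr br (dg m W) (Rp m P i Z) \<in> P"
    using inv Rp_in(1)[OF c i] dg_h unfolding h_invariant_def by blast
  have "(\<lambda>r. E i (br W Z) r - gbr br (dg m W) (Rp m P i Z) r) \<in> hset m"
  proof (rule hset_const[where W = "- br W (phi m P i Z)"])
    show "\<forall>r\<in>{1..m}. E i (br W Z) r - gbr br (dg m W) (Rp m P i Z) r = - br W (phi m P i Z)"
    proof
      fix r assume r: "r \<in> {1..m}"
      show "E i (br W Z) r - gbr br (dg m W) (Rp m P i Z) r = - br W (phi m P i Z)"
        using r by (cases "r = i") (simp_all add: E_def Rp_def dg_def gbr_def badd bzero)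
    qed
    show "\<forall>r. r \<notin> {1..m} \<longrightarrow> E i (br W Z) r - gbr br (dg m W) (Rp m P i Z) r = 0"
      using i by (auto simp: E_def Rp_def dg_def gbr_def bzero)
  qed
  then have "phi m P i (br W Z) = gbr br (dg m W) (Rp m P i Z) m" using phi_char[OF c i in1] by simp
  then show ?thesis using mr im by (simp add: Rp_def E_def dg_def gbr_def bzero)
qed

end



context CSL begin

lemma K_pair: "K (p *\<^sub>R br A B + p' *\<^sub>R br A' B) (q *\<^sub>R A + q' *\<^sub>R A') = (p*q' - p'*q) * K (br A B) A'"
proof -
  have "K (p *\<^sub>R br A B + p' *\<^sub>R br A' B) (q *\<^sub>R A + q' *\<^sub>R A') =
     p*q * K (br A B) A + p*q' * K (br A B) A' + p'*q * K (br A' B) A + p'*q' * K (br A' B) A'"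
    using bilinear_ladd[OF K_bil] bilinear_radd[OF K_bil] bilinear_lmul[OF K_bil] bilinear_rmul[OF K_bil]
    by (simp add: algebra_simps)
  moreover have "K (br A' B) A = - K (br A B) A'" using K_swap[of A' B A] by simp
  ultimately show ?thesis using K_alt[of A B] K_alt[of A' B] by (simp add: algebra_simps)
qed

lemma only_if_lie:
  assumes m: "m \<ge> 2" and nr: "naturally_reductive br a m"
  shows "\<exists>cc. \<forall>u w v. Vc cc m u \<longrightarrow> Vc cc m w \<longrightarrow> Vc cc m v \<longrightarrow> Tf a m u w v = Tf a m v w u"
proof -
  obtain P where c: "is_complement_h m P" and inv: "h_invariant br m P"
    and H: "\<forall>X\<in>P. \<forall>Y\<in>P. Qform br a m (proj_gm m (proj_p m P (gbr br X Y))) (proj_gm m X) = 0"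
    using nr unfolding naturally_reductive_def by blast
  have sg: "is_subspace_g m P" using c unfolding is_complement_h_def by auto
  have add: "\<And>X Y. X\<in>P \<Longrightarrow> Y\<in>P \<Longrightarrow> (\<lambda>i. X i + Y i) \<in> P"
    and scl: "\<And>c X. X \<in> P \<Longrightarrow> (\<lambda>i. c *\<^sub>R X i) \<in> P"
    using sg unfolding is_subspace_g_def by auto
  have "\<forall>i\<in>{1..<m}. \<exists>c. \<forall>Z. phi m P i Z = c *\<^sub>R Z"
    using schur[OF phi_linear[OF c] phi_equiv[OF c inv]] by blast
  then obtain cc where cc: "\<And>i Z. i \<in> {1..<m} \<Longrightarrow> phi m P i Z = cc i *\<^sub>R Z" by metis
  define tens where "tens v Z = (\<lambda>r. if r \<in> {1..m} then v r *\<^sub>R Z else (0::'v))" for v :: "nat \<Rightarrow> real" and Z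
  have tensP: "tens v Z \<in> P" if V: "Vc cc m v" for v Z
  proof -
    have eq: "tens v Z = (\<lambda>r. \<Sum>i\<in>{1..<m}. (v i - v m) *\<^sub>R Rp m P i Z r)"
    proof
      fix r
      show "tens v Z r = (\<Sum>i\<in>{1..<m}. (v i - v m) *\<^sub>R Rp m P i Z r)"
      proof (cases "r \<in> {1..m}")
        case True
        have "(\<Sum>i\<in>{1..<m}. (v i - v m) *\<^sub>R Rp m P i Z r) =
            (\<Sum>i\<in>{1..<m}. ((if i = r then v i - v m else 0) + (v i - v m) * cc i) *\<^sub>R Z)"
          using True by (intro sum.cong refl) (auto simp: Rp_def E_def dg_def cc scaleR_add_right scaleR_add_left)
        also have "\<dots> = (\<Sum>i\<in>{1..<m}. (if i = r then v i - v m else 0) + (v i - v m) * cc i) *\<^sub>R Z"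
          by (simp add: scaleR_sum_left)
        also have "(\<Sum>i\<in>{1..<m}. (if i = r then v i - v m else 0) + (v i - v m) * cc i) = v r"
        proof -
          have s1: "(\<Sum>i\<in>{1..<m}. (if i = r then v i - v m else 0)) = (if r \<in> {1..<m} then v r - v m else 0)"
            by (subst sum.delta) auto
          have s2: "(\<Sum>i\<in>{1..<m}. (v i - v m) * cc i) = v m"
            using V unfolding Vc_def by (simp add: mult.commute)
          have rm: "r \<notin> {1..<m} \<Longrightarrow> r = m" using True by auto
          have "(\<Sum>i\<in>{1..<m}. (if i = r then v i - v m else 0) + (v i - v m) * cc i) =
             (\<Sum>i\<in>{1..<m}. (if i = r then v i - v m else 0)) + (\<Sum>i\<in>{1..<m}. (v i - v m) * cc i)"
            by (rule sum.distrib)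
          also have "\<dots> = (if r \<in> {1..<m} then v r - v m else 0) + v m" by (simp only: s1 s2)
          finally show ?thesis using rm by (cases "r \<in> {1..<m}") auto
        qed
        finally show ?thesis using True unfolding tens_def by simp
      next
        case False
        then show ?thesis unfolding tens_def Rp_def E_def dg_def
          by (auto intro!: sum.neutral)
      qed
    qed
    have "(\<lambda>r. \<Sum>i\<in>{1..<m}. (v i - v m) *\<^sub>R Rp m P i Z r) \<in> P"
      by (rule subspace_g_sum[OF sg]) (auto intro!: scl Rp_in(1)[OF c])
    then show ?thesis unfolding eq .
  qed
  obtain A B where AB: "br A B \<noteq> 0" using nonab by blast
  define A' where "A' = br A B"
  have k0: "K (br A B) A' > 0" unfolding A'_def using K_pos[OF AB] .
  show ?thesis
  proof (intro exI allI impI)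
    fix u w u' assume Vu: "Vc cc m u" and Vw: "Vc cc m w" and Vu': "Vc cc m u'"
    define X where "X = (\<lambda>r. tens u A r + tens u' A' r)"
    define Y where "Y = tens w B"
    have XP: "X \<in> P" unfolding X_def by (intro add tensP Vu Vu')
    have YP: "Y \<in> P" unfolding Y_def by (intro tensP Vw)
    have Pg: "P \<subseteq> gset m" using sg unfolding is_subspace_g_def by auto
    have V: "gbr br X Y \<in> gset m" using XP YP Pg unfolding gset_def gbr_def by (auto simp: bzero)
    have "proj_gm m (proj_p m P (gbr br X Y)) = proj_gm m (gbr br X Y)"
      using proj_p_ex[OF c V] m by (intro proj_gm_h) auto
    moreover have "Qform br a m (proj_gm m (proj_p m P (gbr br X Y))) (proj_gm m X) = 0"
      using H XP YP by blast
    moreover have "Qform br a m (proj_gm m (gbr br X Y)) (proj_gm m X) =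
       (\<Sum>i\<in>{1..<m}. \<Sum>j\<in>{1..<m}. a i j * K (br (X i) (Y i) - br (X m) (Y m)) (X j - X m))"
      unfolding Qform_def proj_gm_def gbr_def K_def by (intro sum.cong refl) auto
    ultimately have Z: "(\<Sum>i\<in>{1..<m}. \<Sum>j\<in>{1..<m}. a i j * K (br (X i) (Y i) - br (X m) (Y m)) (X j - X m)) = 0"
      by metis
    have Xr: "X r = u r *\<^sub>R A + u' r *\<^sub>R A'" and Yr: "Y r = w r *\<^sub>R B" if "r \<in> {1..m}" for r
      using that unfolding X_def Y_def tens_def by auto
    have mr: "m \<in> {1..m}" using m by auto
    have "(\<Sum>i\<in>{1..<m}. \<Sum>j\<in>{1..<m}. a i j * K (br (X i) (Y i) - br (X m) (Y m)) (X j - X m)) =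
      (\<Sum>i\<in>{1..<m}. \<Sum>j\<in>{1..<m}. K (br A B) A' * (a i j * (u i * w i - u m * w m) * (u' j - u' m))
          - K (br A B) A' * (a i j * (u' i * w i - u' m * w m) * (u j - u m)))"
    proof (intro sum.cong refl)
      fix i j assume i: "i \<in> {1..<m}" and j: "j \<in> {1..<m}"
      have e1: "br (X i) (Y i) - br (X m) (Y m) =
         (u i * w i - u m * w m) *\<^sub>R br A B + (u' i * w i - u' m * w m) *\<^sub>R br A' B"
        using i mr by (simp add: Xr Yr badd bscale algebra_simps)
      have e2: "X j - X m = (u j - u m) *\<^sub>R A + (u' j - u' m) *\<^sub>R A'"
        using j mr by (simp add: Xr algebra_simps)
      show "a i j * K (br (X i) (Y i) - br (X m) (Y m)) (X j - X m) =
          K (br A B) A' * (a i j * (u i * w i - u m * w m) * (u' j - u' m))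
          - K (br A B) A' * (a i j * (u' i * w i - u' m * w m) * (u j - u m))"
        unfolding e1 e2 K_pair by (simp add: algebra_simps)
    qed
    also have "\<dots> = K (br A B) A' * (Tf a m u w u' - Tf a m u' w u)"
      unfolding Tf_def by (simp add: sum_subtractf sum_distrib_left right_diff_distrib)
    finally have "K (br A B) A' * (Tf a m u w u' - Tf a m u' w u) = 0" using Z by simp
    then show "Tf a m u w u' = Tf a m u' w u" using k0 by simp
  qed
qed

end



definition dd :: "nat \<Rightarrow> nat \<Rightarrow> nat \<Rightarrow> real" where
  "dd m i p = (if p = i then 1 else 0) - (if p = m then 1 else 0)"

definition GG :: "(nat \<Rightarrow> nat \<Rightarrow> real) \<Rightarrow> nat \<Rightarrow> nat \<Rightarrow> nat \<Rightarrow> real" where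
  "GG a m p q = (\<Sum>i\<in>{1..<m}. \<Sum>j\<in>{1..<m}. a i j * dd m i p * dd m j q)"

lemma dd_sum:
  assumes "m \<ge> 1" "i \<in> {1..<m}"
  shows "(\<Sum>p\<in>{1..m}. dd m i p * x p) = x i - x m"
proof -
  have "(\<Sum>p\<in>{1..m}. dd m i p * x p) = (\<Sum>p\<in>{1..m}. (if p = i then x p else 0) - (if p = m then x p else 0))"
    by (intro sum.cong) (auto simp: dd_def)
  also have "\<dots> = (\<Sum>p\<in>{1..m}. (if p = i then x p else 0)) - (\<Sum>p\<in>{1..m}. (if p = m then x p else 0))"
    by (rule sum_subtractf)
  also have "\<dots> = x i - x m" using assms by (simp add: sum.delta)
  finally show ?thesis .
qed

lemma G1:
  assumes m: "m \<ge> 1"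
  shows "(\<Sum>i\<in>{1..<m}. \<Sum>j\<in>{1..<m}. a i j * (x i - x m) * (y j - y m)) =
    (\<Sum>p\<in>{1..m}. \<Sum>q\<in>{1..m}. GG a m p q * x p * y q)"
proof -
  let ?J = "{1..<m}" and ?I = "{1..m}"
  have "(\<Sum>i\<in>?J. \<Sum>j\<in>?J. a i j * (x i - x m) * (y j - y m)) =
     (\<Sum>i\<in>?J. \<Sum>j\<in>?J. a i j * (\<Sum>p\<in>?I. dd m i p * x p) * (\<Sum>q\<in>?I. dd m j q * y q))"
    using dd_sum[OF m] by (intro sum.cong refl) simp
  also have "\<dots> = (\<Sum>i\<in>?J. \<Sum>j\<in>?J. \<Sum>p\<in>?I. \<Sum>q\<in>?I. a i j * dd m i p * dd m j q * x p * y q)"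
    by (intro sum.cong refl) (simp add: sum_distrib_left sum_distrib_right mult_ac)
  also have "\<dots> = (\<Sum>i\<in>?J. \<Sum>p\<in>?I. \<Sum>j\<in>?J. \<Sum>q\<in>?I. a i j * dd m i p * dd m j q * x p * y q)"
    by (rule sum.cong[OF refl], rule sum.swap)
  also have "\<dots> = (\<Sum>p\<in>?I. \<Sum>i\<in>?J. \<Sum>j\<in>?J. \<Sum>q\<in>?I. a i j * dd m i p * dd m j q * x p * y q)"
    by (rule sum.swap)
  also have "\<dots> = (\<Sum>p\<in>?I. \<Sum>i\<in>?J. \<Sum>q\<in>?I. \<Sum>j\<in>?J. a i j * dd m i p * dd m j q * x p * y q)"
    by (rule sum.cong[OF refl], rule sum.cong[OF refl], rule sum.swap)
  also have "\<dots> = (\<Sum>p\<in>?I. \<Sum>q\<in>?I. \<Sum>i\<in>?J. \<Sum>j\<in>?J. a i j * dd m i p * dd m j q * x p * y q)"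
    by (rule sum.cong[OF refl], rule sum.swap)
  also have "\<dots> = (\<Sum>p\<in>?I. \<Sum>q\<in>?I. GG a m p q * x p * y q)"
    unfolding GG_def by (simp add: sum_distrib_right)
  finally show ?thesis .
qed

lemma G2: "p \<in> {1..<m} \<Longrightarrow> q \<in> {1..<m} \<Longrightarrow> GG a m p q = a p q"
proof -
  assume p: "p \<in> {1..<m}" and q: "q \<in> {1..<m}"
  have "GG a m p q = (\<Sum>i\<in>{1..<m}. \<Sum>j\<in>{1..<m}. (if i = p then (if j = q then a i j else 0) else 0))"
    unfolding GG_def dd_def using p q by (intro sum.cong refl) auto
  also have "\<dots> = (\<Sum>i\<in>{1..<m}. (if i = p then a i q else 0))"
    using q by (intro sum.cong refl) (auto simp: sum.delta)
  also have "\<dots> = a p q" using p by (simp add: sum.delta)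
  finally show ?thesis .
qed

lemma G3: "\<forall>i\<in>{1..<m}. \<forall>j\<in>{1..<m}. a i j = a j i \<Longrightarrow> GG a m p q = GG a m q p"
  unfolding GG_def by (subst sum.swap) (intro sum.cong refl, auto simp: mult_ac)

lemma G4:
  assumes "m \<ge> 1"
  shows "(\<Sum>q\<in>{1..m}. GG a m p q) = 0"
proof -
  have "(\<Sum>q\<in>{1..m}. GG a m p q) = (\<Sum>i\<in>{1..<m}. \<Sum>q\<in>{1..m}. \<Sum>j\<in>{1..<m}. a i j * dd m i p * dd m j q)"
    unfolding GG_def by (rule sum.swap)
  also have "\<dots> = (\<Sum>i\<in>{1..<m}. \<Sum>j\<in>{1..<m}. \<Sum>q\<in>{1..m}. a i j * dd m i p * dd m j q)"
    by (rule sum.cong[OF refl], rule sum.swap)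
  also have "\<dots> = (\<Sum>i\<in>{1..<m}. \<Sum>j\<in>{1..<m}. a i j * dd m i p * (\<Sum>q\<in>{1..m}. dd m j q * 1))"
    by (simp add: sum_distrib_left)
  also have "\<dots> = 0" using dd_sum[OF assms, of _ "\<lambda>_. 1"] by simp
  finally show ?thesis .
qed




lemma sum_two:
  assumes "finite I" "i \<in> I" "j \<in> I" "i \<noteq> j" "\<forall>p\<in>I. p \<noteq> i \<longrightarrow> p \<noteq> j \<longrightarrow> f p = 0"
  shows "(\<Sum>p\<in>I. f p) = f i + (f j :: real)"
proof -
  have "(\<Sum>p\<in>I. f p) = f i + (\<Sum>p\<in>I-{i}. f p)" by (rule sum.remove[OF assms(1,2)])
  also have "(\<Sum>p\<in>I-{i}. f p) = f j + (\<Sum>p\<in>I-{i}-{j}. f p)" using assms by (intro sum.remove) auto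
  also have "(\<Sum>p\<in>I-{i}-{j}. f p) = 0" using assms by (intro sum.neutral) auto
  finally show ?thesis by simp
qed

lemma sum_three:
  assumes "finite I" "i \<in> I" "j \<in> I" "l \<in> I" "i \<noteq> j" "i \<noteq> l" "j \<noteq> l"
    "\<forall>p\<in>I. p \<noteq> i \<longrightarrow> p \<noteq> j \<longrightarrow> p \<noteq> l \<longrightarrow> f p = 0"
  shows "(\<Sum>p\<in>I. f p) = f i + f j + (f l :: real)"
proof -
  have "(\<Sum>p\<in>I. f p) = f i + (\<Sum>p\<in>I-{i}. f p)" by (rule sum.remove[OF assms(1,2)])
  also have "(\<Sum>p\<in>I-{i}. f p) = f j + f l"
    using assms by (intro sum_two) auto
  finally show ?thesis by simp
qed

lemma sum_one:
  assumes "finite I" "i \<in> I" "\<forall>p\<in>I. p \<noteq> i \<longrightarrow> f p = 0"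
  shows "(\<Sum>p\<in>I. f p) = (f i :: real)"
proof -
  have "(\<Sum>p\<in>I. f p) = f i + (\<Sum>p\<in>I-{i}. f p)" by (rule sum.remove[OF assms(1,2)])
  also have "(\<Sum>p\<in>I-{i}. f p) = 0" using assms by (intro sum.neutral) auto
  finally show ?thesis by simp
qed

definition TG :: "(nat \<Rightarrow> nat \<Rightarrow> real) \<Rightarrow> nat set \<Rightarrow> (nat \<Rightarrow> real) \<Rightarrow> (nat \<Rightarrow> real) \<Rightarrow> (nat \<Rightarrow> real) \<Rightarrow> real" where
  "TG G I u w v = (\<Sum>p\<in>I. \<Sum>q\<in>I. G p q * (u p * w p) * v q)"

definition ev :: "nat \<Rightarrow> nat \<Rightarrow> real" where "ev i = (\<lambda>r. if r = i then 1 else 0)"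
definition fv :: "(nat \<Rightarrow> real) \<Rightarrow> nat \<Rightarrow> nat \<Rightarrow> nat \<Rightarrow> real" where
  "fv \<mu> p q = (\<lambda>r. if r = p then \<mu> q else if r = q then - \<mu> p else 0)"

locale cls =
  fixes G :: "nat \<Rightarrow> nat \<Rightarrow> real" and \<mu> :: "nat \<Rightarrow> real" and I :: "nat set"
  assumes fin: "finite I" and two: "\<exists>i\<in>I. \<exists>j\<in>I. i \<noteq> j"
    and sym: "\<forall>p\<in>I. \<forall>q\<in>I. G p q = G q p"
    and rows: "\<forall>p\<in>I. (\<Sum>q\<in>I. G p q) = 0"
    and pd: "\<And>x. \<exists>i\<in>I. \<exists>j\<in>I. x i \<noteq> x j \<Longrightarrow> (\<Sum>p\<in>I. \<Sum>q\<in>I. G p q * x p * x q) > 0"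
    and sig: "(\<Sum>r\<in>I. \<mu> r) \<noteq> 0"
    and tsym: "\<And>u w v. (\<Sum>r\<in>I. \<mu> r * u r) = 0 \<Longrightarrow> (\<Sum>r\<in>I. \<mu> r * w r) = 0 \<Longrightarrow>
        (\<Sum>r\<in>I. \<mu> r * v r) = 0 \<Longrightarrow> TG G I u w v = TG G I v w u"
begin

abbreviation inV :: "(nat \<Rightarrow> real) \<Rightarrow> bool" where "inV w \<equiv> (\<Sum>r\<in>I. \<mu> r * w r) = 0"

lemma fv_inV: "p \<in> I \<Longrightarrow> q \<in> I \<Longrightarrow> p \<noteq> q \<Longrightarrow> inV (fv \<mu> p q)"
  by (subst sum_two[OF fin, of p q]) (auto simp: fv_def)

lemma fv_sum: "p \<in> I \<Longrightarrow> q \<in> I \<Longrightarrow> p \<noteq> q \<Longrightarrow> (\<Sum>r\<in>I. c r * fv \<mu> p q r) = c p * \<mu> q - c q * \<mu> p"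
  by (subst sum_two[OF fin, of p q]) (auto simp: fv_def)

lemma ev_inV: "i \<in> I \<Longrightarrow> \<mu> i = 0 \<Longrightarrow> inV (ev i)"
  by (subst sum_one[OF fin, of i]) (auto simp: ev_def)

lemma lemB:
  assumes "\<And>w. inV w \<Longrightarrow> (\<Sum>r\<in>I. c r * w r) = 0" and "p \<in> I" "q \<in> I"
  shows "c p * \<mu> q = c q * \<mu> p"
proof (cases "p = q")
  case False
  then show ?thesis using assms(1)[OF fv_inV[OF assms(2,3) False]] fv_sum[OF assms(2,3) False] by simp
qed simp

lemma lemA:
  assumes "\<And>w. inV w \<Longrightarrow> (\<Sum>r\<in>I. c r * w r) = 0" and "(\<Sum>r\<in>I. c r) = 0" and p: "p \<in> I"
  shows "c p = 0"
proof -
  have "(\<Sum>q\<in>I. c p * \<mu> q) = (\<Sum>q\<in>I. c q * \<mu> p)"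
    using lemB[OF assms(1) p] by (intro sum.cong) auto
  then have "c p * (\<Sum>q\<in>I. \<mu> q) = \<mu> p * (\<Sum>q\<in>I. c q)"
    by (simp add: sum_distrib_left sum_distrib_right mult.commute)
  then show ?thesis using assms(2) sig by simp
qed

lemma Gpos: "i \<in> I \<Longrightarrow> G i i > 0"
proof -
  assume i: "i \<in> I"
  obtain j where j: "j \<in> I" "j \<noteq> i" using two by blast
  have "(\<Sum>p\<in>I. \<Sum>q\<in>I. G p q * ev i p * ev i q) > 0"
    using i j by (intro pd) (auto simp: ev_def intro!: bexI[of _ i] bexI[of _ j])
  moreover have "(\<Sum>p\<in>I. \<Sum>q\<in>I. G p q * ev i p * ev i q) = (\<Sum>p\<in>I. G p i * ev i p)"
    by (rule sum.cong[OF refl], subst sum_one[OF fin i]) (auto simp: ev_def)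
  moreover have "(\<Sum>p\<in>I. G p i * ev i p) = G i i"
    by (subst sum_one[OF fin i]) (auto simp: ev_def)
  ultimately show ?thesis by simp
qed

lemma omega_e:
  assumes i: "i \<in> I" and mi: "\<mu> i = 0" and w: "inV w" and v: "inV v"
  shows "(\<Sum>q\<in>I. ((w i - w q) * G i q) * v q) = 0"
proof -
  have t: "TG G I (ev i) w v = TG G I v w (ev i)" by (rule tsym[OF ev_inV[OF i mi] w v])
  have a: "TG G I (ev i) w v = (\<Sum>q\<in>I. G i q * w i * v q)"
    unfolding TG_def using i by (subst sum_one[OF fin i]) (auto simp: ev_def intro!: sum.neutral)
  have b: "TG G I v w (ev i) = (\<Sum>p\<in>I. G p i * v p * w p)"
    unfolding TG_def using i by (intro sum.cong refl, subst sum_one[OF fin i]) (auto simp: ev_def)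
  have "(\<Sum>q\<in>I. ((w i - w q) * G i q) * v q) = (\<Sum>q\<in>I. G i q * w i * v q) - (\<Sum>p\<in>I. G p i * v p * w p)"
    using sym i by (simp add: sum_subtractf[symmetric] algebra_simps)
  then show ?thesis using t a b by simp
qed

end



lemma chain_const:
  fixes h :: "nat \<Rightarrow> nat \<Rightarrow> real"
  assumes hs: "\<forall>p\<in>I. \<forall>q\<in>I. h p q = h q p"
    and tri: "\<And>i j l. i \<in> I \<Longrightarrow> j \<in> I \<Longrightarrow> l \<in> I \<Longrightarrow> i \<noteq> j \<Longrightarrow> i \<noteq> l \<Longrightarrow> j \<noteq> l \<Longrightarrow> h i j = h i l"
    and "p \<in> I" "q \<in> I" "p' \<in> I" "q' \<in> I" "p \<noteq> q" "p' \<noteq> q'"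
  shows "h p q = h p' q'"
proof (cases "p = p'")
  case True
  show ?thesis
  proof (cases "q = q'")
    case True then show ?thesis using \<open>p = p'\<close> by simp
  next
    case False then show ?thesis using \<open>p = p'\<close> assms(3-8) tri[of p q q'] by simp
  qed
next
  case False
  have 1: "h p q = h p p'"
  proof (cases "q = p'")
    case True then show ?thesis by simp
  next
    case F: False then show ?thesis using assms(3-8) False tri[of p q p'] by simp
  qed
  have 2: "h p p' = h p' p" using hs assms by auto
  have 3: "h p' p = h p' q'"
  proof (cases "q' = p")
    case True then show ?thesis by simp
  next
    case F: False then show ?thesis using assms(3-8) False tri[of p' p q'] by simp
  qed
  show ?thesis using 1 2 3 by simp
qed

context cls begin

lemma exists_nz: "\<exists>k\<in>I. \<mu> k \<noteq> 0"
proof (rule ccontr)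
  assume "\<not> (\<exists>k\<in>I. \<mu> k \<noteq> 0)"
  then have "(\<Sum>r\<in>I. \<mu> r) = 0" by (intro sum.neutral) auto
  then show False using sig by simp
qed

lemma step1:
  assumes i: "i \<in> I" and mi: "\<mu> i = 0"
  shows "\<exists>t. t \<noteq> 0 \<and> (\<forall>q\<in>I. q \<noteq> i \<longrightarrow> G i q = t * \<mu> q)"
proof -
  define c0 where "c0 q = (ev i i - ev i q) * G i q" for q
  have func: "(\<Sum>q\<in>I. c0 q * v q) = 0" if "inV v" for v
    unfolding c0_def using omega_e[OF i mi ev_inV[OF i mi] that] .
  have c0q: "c0 q = (if q = i then 0 else G i q)" for q unfolding c0_def ev_def by simp
  obtain k where k: "k \<in> I" "\<mu> k \<noteq> 0" using exists_nz by blast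
  define t where "t = c0 k / \<mu> k"
  have ct: "c0 q = t * \<mu> q" if "q \<in> I" for q
  proof -
    have "c0 q * \<mu> k = c0 k * \<mu> q" using lemB[OF func that k(1)] .
    then show ?thesis unfolding t_def using k(2) by (simp add: field_simps)
  qed
  have Gt: "\<forall>q\<in>I. q \<noteq> i \<longrightarrow> G i q = t * \<mu> q"
  proof (intro ballI impI)
    fix q assume "q \<in> I" "q \<noteq> i"
    then show "G i q = t * \<mu> q" using ct[of q] c0q[of q] by simp
  qed
  have "0 = (\<Sum>q\<in>I. G i q)" using rows i by simp
  also have "\<dots> = G i i + (\<Sum>q\<in>I-{i}. G i q)" by (rule sum.remove[OF fin i])
  also have "(\<Sum>q\<in>I-{i}. G i q) = (\<Sum>q\<in>I-{i}. t * \<mu> q)" using Gt by (intro sum.cong) auto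
  also have "\<dots> = t * (\<Sum>q\<in>I. \<mu> q)"
    using sum.remove[OF fin i, of \<mu>] mi by (simp add: sum_distrib_left)
  finally have "G i i = - t * (\<Sum>q\<in>I. \<mu> q)" by simp
  then have "t \<noteq> 0" using Gpos[OF i] by auto
  then show ?thesis using Gt by blast
qed

lemma step2:
  assumes i: "i \<in> I" and mi: "\<mu> i = 0" and pq: "p \<in> I" "q \<in> I" "p \<noteq> q" "\<mu> p \<noteq> 0" "\<mu> q \<noteq> 0"
  shows False
proof -
  obtain t where t: "t \<noteq> 0" "\<forall>q\<in>I. q \<noteq> i \<longrightarrow> G i q = t * \<mu> q" using step1[OF i mi] by blast
  have pi: "p \<noteq> i" "q \<noteq> i" using pq mi by auto
  have weq: "w p = w q" if w: "inV w" for w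
  proof -
    define c where "c r = (w i - w r) * G i r" for r
    have func: "(\<Sum>r\<in>I. c r * v r) = 0" if "inV v" for v
      unfolding c_def using omega_e[OF i mi w that] .
    have "c p * \<mu> q = c q * \<mu> p" using lemB[OF func pq(1,2)] .
    then have "(w i - w p) * t * \<mu> p * \<mu> q = (w i - w q) * t * \<mu> q * \<mu> p"
      unfolding c_def using t pi pq by (simp add: mult_ac)
    then show ?thesis using t pq by (simp add: algebra_simps)
  qed
  define c where "c r = ev p r - ev q r" for r
  have "c p = 0"
  proof (rule lemA[OF _ _ pq(1)])
    fix w assume "inV w"
    then show "(\<Sum>r\<in>I. c r * w r) = 0" using weq
      by (subst sum_two[OF fin pq(1,2,3)]) (auto simp: c_def ev_def)
  next
    show "(\<Sum>r\<in>I. c r) = 0"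
      by (subst sum_two[OF fin pq(1,2,3)]) (auto simp: c_def ev_def)
  qed
  then show False using pq unfolding c_def ev_def by simp
qed

lemma caseB:
  assumes "\<exists>i\<in>I. \<mu> i = 0"
  shows "\<exists>k\<in>I. \<forall>i\<in>I. \<forall>j\<in>I. i \<noteq> j \<longrightarrow> i \<noteq> k \<longrightarrow> j \<noteq> k \<longrightarrow> G i j = 0"
proof -
  obtain i0 where i0: "i0 \<in> I" "\<mu> i0 = 0" using assms by blast
  obtain k where k: "k \<in> I" "\<mu> k \<noteq> 0" using exists_nz by blast
  have z: "\<mu> j = 0" if "j \<in> I" "j \<noteq> k" for j
    using step2[OF i0 that(1) k(1) that(2) _ k(2)] by blast
  show ?thesis
  proof (intro bexI[OF _ k(1)] ballI impI)
    fix i j assume ij: "i \<in> I" "j \<in> I" "i \<noteq> j" "i \<noteq> k" "j \<noteq> k"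
    obtain t where t: "\<forall>q\<in>I. q \<noteq> i \<longrightarrow> G i q = t * \<mu> q" using step1[OF ij(1) z[OF ij(1,4)]] by blast
    show "G i j = 0" using t z[OF ij(2,5)] ij by simp
  qed
qed

lemma TG_two:
  assumes a: "a \<in> I" "b \<in> I" "a \<noteq> b" "\<forall>r\<in>I. r \<noteq> a \<longrightarrow> r \<noteq> b \<longrightarrow> u r = 0"
    and c: "c \<in> I" "d \<in> I" "c \<noteq> d" "\<forall>r\<in>I. r \<noteq> c \<longrightarrow> r \<noteq> d \<longrightarrow> v r = 0"
  shows "TG G I u w v = u a * w a * (G a c * v c + G a d * v d) + u b * w b * (G b c * v c + G b d * v d)"
proof -
  have "TG G I u w v = (\<Sum>p\<in>I. G p c * (u p * w p) * v c + G p d * (u p * w p) * v d)"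
    unfolding TG_def using c by (intro sum.cong refl, subst sum_two[OF fin c(1,2,3)]) auto
  also have "\<dots> = u a * w a * (G a c * v c + G a d * v d) + u b * w b * (G b c * v c + G b d * v d)"
    using a by (subst sum_two[OF fin a(1,2,3)]) (auto simp: algebra_simps)
  finally show ?thesis .
qed

lemma caseA_R:
  assumes nz: "\<forall>r\<in>I. \<mu> r \<noteq> 0" and ijl: "i \<in> I" "j \<in> I" "l \<in> I" "i \<noteq> j" "i \<noteq> l" "j \<noteq> l"
  shows "\<mu> l * G i j = \<mu> j * G i l"
proof -
  define c where "c r = (if r = i then \<mu> l * G i j - \<mu> j * G i l else if r = j then \<mu> i * G j l - \<mu> l * G i j
     else if r = l then \<mu> j * G i l - \<mu> i * G j l else 0)" for r
  have "c i = 0"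
  proof (rule lemA[OF _ _ ijl(1)])
    fix w assume w: "inV w"
    let ?u = "fv \<mu> i j" and ?v = "fv \<mu> i l"
    have t: "TG G I ?u w ?v = TG G I ?v w ?u"
      using tsym fv_inV ijl w by blast
    have e1: "TG G I ?u w ?v = \<mu> j * w i * (G i i * \<mu> l + G i l * (- \<mu> i)) + (- \<mu> i) * w j * (G j i * \<mu> l + G j l * (- \<mu> i))"
      using ijl by (subst TG_two[of i j _ i l]) (auto simp: fv_def)
    have e2: "TG G I ?v w ?u = \<mu> l * w i * (G i i * \<mu> j + G i j * (- \<mu> i)) + (- \<mu> i) * w l * (G l i * \<mu> j + G l j * (- \<mu> i))"
      using ijl by (subst TG_two[of i l _ i j]) (auto simp: fv_def)
    have S: "(\<Sum>r\<in>I. c r * w r) = c i * w i + c j * w j + c l * w l"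
      using ijl by (subst sum_three[OF fin ijl]) (auto simp: c_def)
    have cv: "c i = \<mu> l * G i j - \<mu> j * G i l" "c j = \<mu> i * G j l - \<mu> l * G i j" "c l = \<mu> j * G i l - \<mu> i * G j l"
      using ijl by (auto simp: c_def)
    have sy: "G j i = G i j" "G l i = G i l" "G l j = G j l" using sym ijl by auto
    have "\<mu> i * (c i * w i + c j * w j + c l * w l) = TG G I ?u w ?v - TG G I ?v w ?u"
      unfolding cv e1 e2 sy by (simp add: algebra_simps)
    then have "\<mu> i * (\<Sum>r\<in>I. c r * w r) = 0" using t S by simp
    then show "(\<Sum>r\<in>I. c r * w r) = 0" using nz ijl by simp
  next
    show "(\<Sum>r\<in>I. c r) = 0"
      using ijl by (subst sum_three[OF fin ijl]) (auto simp: c_def)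
  qed
  then show ?thesis unfolding c_def by simp
qed

lemma caseA:
  assumes nz: "\<forall>r\<in>I. \<mu> r \<noteq> 0"
  shows "\<exists>\<kappa>. \<kappa> \<noteq> 0 \<and> (\<forall>p\<in>I. \<forall>q\<in>I. p \<noteq> q \<longrightarrow> G p q = - \<kappa> * \<mu> p * \<mu> q)"
proof -
  define h where "h p q = G p q / (\<mu> p * \<mu> q)" for p q
  have hs: "\<forall>p\<in>I. \<forall>q\<in>I. h p q = h q p" unfolding h_def using sym by (auto simp: mult.commute)
  have tri: "h i j = h i l" if "i \<in> I" "j \<in> I" "l \<in> I" "i \<noteq> j" "i \<noteq> l" "j \<noteq> l" for i j l
  proof -
    have "\<mu> l * G i j = \<mu> j * G i l" by (rule caseA_R[OF nz that])
    then show ?thesis unfolding h_def using nz that by (simp add: field_simps)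
  qed
  obtain p0 q0 where pq0: "p0 \<in> I" "q0 \<in> I" "p0 \<noteq> q0" using two by blast
  define \<kappa> where "\<kappa> = - h p0 q0"
  have G: "G p q = - \<kappa> * \<mu> p * \<mu> q" if "p \<in> I" "q \<in> I" "p \<noteq> q" for p q
  proof -
    have "h p q = h p0 q0" using chain_const[OF hs tri that(1,2) pq0(1,2) that(3) pq0(3)] by blast
    then show ?thesis unfolding \<kappa>_def h_def using nz that by (simp add: field_simps)
  qed
  have "\<kappa> \<noteq> 0"
  proof
    assume k0: "\<kappa> = 0"
    have "0 = (\<Sum>q\<in>I. G p0 q)" using rows pq0 by simp
    also have "\<dots> = G p0 p0 + (\<Sum>q\<in>I-{p0}. G p0 q)" by (rule sum.remove[OF fin pq0(1)])
    also have "(\<Sum>q\<in>I-{p0}. G p0 q) = 0" using G k0 pq0 by (intro sum.neutral) auto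
    finally show False using Gpos[OF pq0(1)] by simp
  qed
  then show ?thesis using G by blast
qed

end



lemma only_if_G:
  fixes a :: "nat \<Rightarrow> nat \<Rightarrow> real" and m :: nat
  assumes m: "m \<ge> 2"
    and sym: "\<forall>i\<in>{1..<m}. \<forall>j\<in>{1..<m}. a i j = a j i"
    and pd: "\<forall>x :: nat \<Rightarrow> real. (\<exists>i\<in>{1..<m}. x i \<noteq> 0) \<longrightarrow>
           (\<Sum>i\<in>{1..<m}. \<Sum>j\<in>{1..<m}. a i j * x i * x j) > 0"
    and T: "\<forall>u w v. Vc cc m u \<longrightarrow> Vc cc m w \<longrightarrow> Vc cc m v \<longrightarrow> Tf a m u w v = Tf a m v w u"
  defines "\<mu> \<equiv> (\<lambda>r. if r = m then - (1 + (\<Sum>i\<in>{1..<m}. cc i)) else cc r)"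
  shows "cls (GG a m) \<mu> {1..m}"
proof -
  have m1: "m \<ge> 1" using m by simp
  have IJ: "{1..m} = insert m {1..<m}" using m by auto
  have muv: "(\<Sum>r\<in>{1..m}. \<mu> r * v r) = (\<Sum>i\<in>{1..<m}. cc i * (v i - v m)) - v m" for v
  proof -
    have step: "(\<Sum>r\<in>{1..m}. \<mu> r * v r) = \<mu> m * v m + (\<Sum>r\<in>{1..<m}. \<mu> r * v r)"
      unfolding IJ by simp
    have step2: "(\<Sum>r\<in>{1..<m}. \<mu> r * v r) = (\<Sum>r\<in>{1..<m}. cc r * v r)"
      unfolding \<mu>_def by (intro sum.cong) auto
    have s1: "(\<Sum>i\<in>{1..<m}. cc i * (v i - v m)) = (\<Sum>i\<in>{1..<m}. cc i * v i) - (\<Sum>i\<in>{1..<m}. cc i) * v m"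
      by (simp add: right_diff_distrib sum_subtractf sum_distrib_right)
    have mm: "\<mu> m * v m = - v m - (\<Sum>i\<in>{1..<m}. cc i) * v m" by (simp add: \<mu>_def algebra_simps)
    show ?thesis using step step2 s1 mm by linarith
  qed
  have Vc_iff: "Vc cc m v \<longleftrightarrow> (\<Sum>r\<in>{1..m}. \<mu> r * v r) = 0" for v
    unfolding Vc_def muv by auto
  show ?thesis
  proof
    show "finite {1..m}" by simp
    show "\<exists>i\<in>{1..m}. \<exists>j\<in>{1..m}. i \<noteq> j" using m by (intro bexI[of _ 1] bexI[of _ m]) auto
    show "\<forall>p\<in>{1..m}. \<forall>q\<in>{1..m}. GG a m p q = GG a m q p" using G3[OF sym] by blast
    show "\<forall>p\<in>{1..m}. (\<Sum>q\<in>{1..m}. GG a m p q) = 0" using G4[OF m1] by blast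
    show "(\<Sum>r\<in>{1..m}. \<mu> r) \<noteq> 0"
    proof -
      have "(\<Sum>r\<in>{1..m}. \<mu> r) = (\<Sum>r\<in>{1..m}. \<mu> r * 1)" by simp
      also have "\<dots> = -1" unfolding muv by simp
      finally show ?thesis by simp
    qed
  next
    fix x :: "nat \<Rightarrow> real" assume "\<exists>i\<in>{1..m}. \<exists>j\<in>{1..m}. x i \<noteq> x j"
    then obtain i j where ij: "i \<in> {1..m}" "j \<in> {1..m}" "x i \<noteq> x j" by blast
    have "\<exists>r\<in>{1..<m}. x r - x m \<noteq> 0"
    proof (cases "x i = x m")
      case True
      then have "j \<noteq> m" using ij by auto
      then show ?thesis using ij True by (intro bexI[of _ j]) auto
    next
      case False
      then have "i \<noteq> m" by auto
      then show ?thesis using ij False by (intro bexI[of _ i]) auto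
    qed
    then have "(\<Sum>i\<in>{1..<m}. \<Sum>j\<in>{1..<m}. a i j * (x i - x m) * (x j - x m)) > 0"
      using pd[rule_format, of "\<lambda>r. x r - x m"] by simp
    then show "(\<Sum>p\<in>{1..m}. \<Sum>q\<in>{1..m}. GG a m p q * x p * x q) > 0" unfolding G1[OF m1] .
  next
    fix u w v :: "nat \<Rightarrow> real"
    assume "(\<Sum>r\<in>{1..m}. \<mu> r * u r) = 0" "(\<Sum>r\<in>{1..m}. \<mu> r * w r) = 0" "(\<Sum>r\<in>{1..m}. \<mu> r * v r) = 0"
    then have "Tf a m u w v = Tf a m v w u" using T Vc_iff by blast
    moreover have "Tf a m u w v = TG (GG a m) {1..m} u w v" for u w v
      unfolding Tf_def TG_def G1[OF m1, symmetric] by simp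
    ultimately show "TG (GG a m) {1..m} u w v = TG (GG a m) {1..m} v w u" by simp
  qed
qed

lemma mu_sum:
  fixes cc :: "nat \<Rightarrow> real"
  assumes m: "m \<ge> 2"
  defines "\<mu> \<equiv> (\<lambda>r. if r = m then - (1 + (\<Sum>i\<in>{1..<m}. cc i)) else cc r)"
  shows "(\<Sum>r\<in>{1..m}. \<mu> r) = -1"
proof -
  have IJ: "{1..m} = insert m {1..<m}" using m by auto
  have "(\<Sum>r\<in>{1..<m}. \<mu> r) = (\<Sum>r\<in>{1..<m}. cc r)" unfolding \<mu>_def by (intro sum.cong) auto
  then show ?thesis unfolding IJ by (simp add: \<mu>_def)
qed




lemma final_only_if:
  fixes a :: "nat \<Rightarrow> nat \<Rightarrow> real" and m :: nat and \<mu> :: "nat \<Rightarrow> real"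
  assumes m: "m \<ge> 2"
    and c: "cls (GG a m) \<mu> {1..m}" and s1: "(\<Sum>r\<in>{1..m}. \<mu> r) = -1"
  shows "((\<forall>i\<in>{1..<m}. a i i > 0) \<and> (\<forall>i\<in>{1..<m}. \<forall>j\<in>{1..<m}. i \<noteq> j \<longrightarrow> a i j = 0))
    \<or> (\<exists>k\<in>{1..<m}. (\<forall>i\<in>{1..<m}. i \<noteq> k \<longrightarrow> - a i k = a i i \<and> a i i > 0)
          \<and> (\<forall>i\<in>{1..<m}. \<forall>j\<in>{1..<m}. i \<noteq> j \<and> i \<noteq> k \<and> j \<noteq> k \<longrightarrow> a i j = 0)
          \<and> a k k > (\<Sum>i\<in>{1..<m} - {k}. a i i))
    \<or> (\<exists>\<alpha> :: nat \<Rightarrow> real. (\<forall>i\<in>{1..m}. \<alpha> i \<noteq> 0)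
          \<and> (\<forall>i\<in>{1..<m}. \<forall>j\<in>{1..<m}.
                a i j = (if i = j then \<alpha> i else 0) - \<alpha> i * \<alpha> j / (\<Sum>l\<in>{1..m}. \<alpha> l))
          \<and> ((\<forall>i\<in>{1..m}. \<alpha> i > 0)
             \<or> ((\<exists>!i. i \<in> {1..m} \<and> \<alpha> i < 0) \<and> (\<Sum>l\<in>{1..m}. \<alpha> l) < 0)))"
proof -
  interpret cls "GG a m" \<mu> "{1..m}" by (rule c)
  let ?G = "GG a m"
  have aG: "a p q = ?G p q" if "p \<in> {1..<m}" "q \<in> {1..<m}" for p q using G2[OF that] by simp
  have Gs: "?G p q = ?G q p" if "p \<in> {1..m}" "q \<in> {1..m}" for p q using sym that by blast
  have mI: "m \<in> {1..m}" using m by auto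
  show ?thesis
  proof (cases "\<exists>i\<in>{1..m}. \<mu> i = 0")
    case True
    obtain k where k: "k \<in> {1..m}" and st: "\<forall>i\<in>{1..m}. \<forall>j\<in>{1..m}. i \<noteq> j \<longrightarrow> i \<noteq> k \<longrightarrow> j \<noteq> k \<longrightarrow> ?G i j = 0"
      using caseB[OF True] by blast
    have rowk: "?G i k = - ?G i i" if i: "i \<in> {1..m}" "i \<noteq> k" for i
    proof -
      have "0 = (\<Sum>q\<in>{1..m}. ?G i q)" using rows i by simp
      also have "\<dots> = ?G i i + ?G i k" using st i k by (intro sum_two[OF fin i(1) k i(2)]) auto
      finally show ?thesis by simp
    qed
    show ?thesis
    proof (cases "k = m")
      case True
      have "(\<forall>i\<in>{1..<m}. a i i > 0) \<and> (\<forall>i\<in>{1..<m}. \<forall>j\<in>{1..<m}. i \<noteq> j \<longrightarrow> a i j = 0)"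
        using aG Gpos st True by auto
      then show ?thesis by blast
    next
      case False
      then have kJ: "k \<in> {1..<m}" using k by auto
      have b1: "\<forall>i\<in>{1..<m}. i \<noteq> k \<longrightarrow> - a i k = a i i \<and> a i i > 0"
        using aG rowk kJ Gpos by auto
      have b2: "\<forall>i\<in>{1..<m}. \<forall>j\<in>{1..<m}. i \<noteq> j \<and> i \<noteq> k \<and> j \<noteq> k \<longrightarrow> a i j = 0"
        using aG st by auto
      have b3: "a k k > (\<Sum>i\<in>{1..<m} - {k}. a i i)"
      proof -
        have "0 = (\<Sum>q\<in>{1..m}. ?G k q)" using rows k by simp
        also have "\<dots> = ?G k k + (\<Sum>q\<in>{1..m}-{k}. ?G k q)" by (rule sum.remove[OF fin k])
        also have "(\<Sum>q\<in>{1..m}-{k}. ?G k q) = (\<Sum>q\<in>{1..m}-{k}. - ?G q q)"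
          using rowk Gs k by (intro sum.cong) auto
        also have "{1..m}-{k} = insert m ({1..<m}-{k})" using False m by auto
        also have "(\<Sum>q\<in>insert m ({1..<m}-{k}). - ?G q q) = - ?G m m + (\<Sum>q\<in>{1..<m}-{k}. - ?G q q)"
          by simp
        also have "(\<Sum>q\<in>{1..<m}-{k}. - ?G q q) = - (\<Sum>q\<in>{1..<m}-{k}. a q q)"
          using aG by (simp add: sum_negf)
        finally have "?G k k = ?G m m + (\<Sum>q\<in>{1..<m}-{k}. a q q)" by simp
        then show ?thesis using Gpos[OF mI] aG[OF kJ kJ] by simp
      qed
      show ?thesis using kJ b1 b2 b3 by blast
    qed
  next
    case False
    then have nz: "\<forall>r\<in>{1..m}. \<mu> r \<noteq> 0" by blast
    obtain \<kappa> where k0: "\<kappa> \<noteq> 0" and Gk: "\<forall>p\<in>{1..m}. \<forall>q\<in>{1..m}. p \<noteq> q \<longrightarrow> ?G p q = - \<kappa> * \<mu> p * \<mu> q"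
      using caseA[OF nz] by blast
    have Gd: "?G p p = - \<kappa> * \<mu> p - \<kappa> * (\<mu> p)^2" if p: "p \<in> {1..m}" for p
    proof -
      have "0 = (\<Sum>q\<in>{1..m}. ?G p q)" using rows p by simp
      also have "\<dots> = ?G p p + (\<Sum>q\<in>{1..m}-{p}. ?G p q)" by (rule sum.remove[OF fin p])
      also have "(\<Sum>q\<in>{1..m}-{p}. ?G p q) = (\<Sum>q\<in>{1..m}-{p}. - \<kappa> * \<mu> p * \<mu> q)"
        using Gk p by (intro sum.cong) auto
      also have "\<dots> = - \<kappa> * \<mu> p * (\<Sum>q\<in>{1..m}-{p}. \<mu> q)" by (simp add: sum_distrib_left)
      also have "(\<Sum>q\<in>{1..m}-{p}. \<mu> q) = -1 - \<mu> p"
        using sum.remove[OF fin p, of \<mu>] s1 by simp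
      finally show ?thesis by (simp add: algebra_simps power2_eq_square)
    qed
    define \<alpha> where "\<alpha> r = - \<kappa> * \<mu> r" for r
    have S0: "(\<Sum>l\<in>{1..m}. \<alpha> l) = - \<kappa> * (\<Sum>l\<in>{1..m}. \<mu> l)" unfolding \<alpha>_def by (rule sum_distrib_left[symmetric])
    have S: "(\<Sum>l\<in>{1..m}. \<alpha> l) = \<kappa>" using S0 s1 by simp
    have anz: "\<forall>i\<in>{1..m}. \<alpha> i \<noteq> 0" using nz k0 unfolding \<alpha>_def by simp
    have Goff: "?G p q = - \<alpha> p * \<alpha> q / \<kappa>" if "p \<in> {1..m}" "q \<in> {1..m}" "p \<noteq> q" for p q
      using Gk that k0 unfolding \<alpha>_def by (simp add: field_simps power2_eq_square)
    have Gdia: "?G p p = \<alpha> p - (\<alpha> p)^2 / \<kappa>" if "p \<in> {1..m}" for p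
      using Gd[OF that] k0 unfolding \<alpha>_def by (simp add: field_simps power2_eq_square)
    have form: "\<forall>i\<in>{1..<m}. \<forall>j\<in>{1..<m}. a i j = (if i = j then \<alpha> i else 0) - \<alpha> i * \<alpha> j / (\<Sum>l\<in>{1..m}. \<alpha> l)"
    proof (intro ballI)
      fix i j assume ij: "i \<in> {1..<m}" "j \<in> {1..<m}"
      then have ij': "i \<in> {1..m}" "j \<in> {1..m}" by auto
      show "a i j = (if i = j then \<alpha> i else 0) - \<alpha> i * \<alpha> j / (\<Sum>l\<in>{1..m}. \<alpha> l)"
      proof (cases "i = j")
        case True then show ?thesis using aG[OF ij] Gdia[OF ij'(1)] S by (simp add: power2_eq_square)
      next
        case False then show ?thesis using aG[OF ij] Goff[OF ij' False] S by simp
      qed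
    qed
    have sign: "(\<forall>i\<in>{1..m}. \<alpha> i > 0) \<or> ((\<exists>!i. i \<in> {1..m} \<and> \<alpha> i < 0) \<and> \<kappa> < 0)"
    proof (cases "\<forall>i\<in>{1..m}. \<alpha> i > 0")
      case True then show ?thesis by blast
    next
      case False
      then obtain i where i: "i \<in> {1..m}" "\<alpha> i < 0" using anz by force
      have uniq: "j = i" if j: "j \<in> {1..m}" "\<alpha> j < 0" for j
      proof (rule ccontr)
        assume ji: "j \<noteq> i"
        define x where "x r = (if r = i then \<alpha> j else if r = j then - \<alpha> i else 0)" for r
        have "x i \<noteq> x j" using ji i j unfolding x_def by auto
        then have pos: "(\<Sum>p\<in>{1..m}. \<Sum>q\<in>{1..m}. ?G p q * x p * x q) > 0" using i j by (intro pd) blast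
        have "(\<Sum>p\<in>{1..m}. \<Sum>q\<in>{1..m}. ?G p q * x p * x q) = TG ?G {1..m} x (\<lambda>_. 1) x"
          unfolding TG_def by simp
        also have "\<dots> = x i * 1 * (?G i i * x i + ?G i j * x j) + x j * 1 * (?G j i * x i + ?G j j * x j)"
          using i j ji by (intro TG_two) (auto simp: x_def)
        also have "\<dots> = \<alpha> i * \<alpha> j * (\<alpha> i + \<alpha> j)"
          using ji i j k0 unfolding Gdia[OF i(1)] Gdia[OF j(1)] Goff[OF i(1) j(1) ji[symmetric]] Goff[OF j(1) i(1) ji]
          by (simp add: x_def field_simps power2_eq_square)
        finally have "\<alpha> i * \<alpha> j * (\<alpha> i + \<alpha> j) > 0" using pos by simp
        moreover have "\<alpha> i * \<alpha> j > 0" using i j by (simp add: mult_neg_neg)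
        moreover have "\<alpha> i + \<alpha> j < 0" using i j by simp
        ultimately show False by (simp add: mult_pos_neg zero_less_mult_iff)
      qed
      have "\<kappa> < 0"
      proof (rule ccontr)
        assume "\<not> \<kappa> < 0"
        then have kp: "\<kappa> > 0" using k0 by simp
        have "(\<alpha> i)^2 / \<kappa> \<ge> 0" using kp by simp
        then have "?G i i < 0" using Gdia[OF i(1)] i(2) by simp
        then show False using Gpos[OF i(1)] by simp
      qed
      moreover have "\<exists>!i. i \<in> {1..m} \<and> \<alpha> i < 0" using i uniq by blast
      ultimately show ?thesis by blast
    qed
    show ?thesis using anz form sign S by (intro disjI2) blast
  qed
qed




theorem mainTheorem2:
  fixes br :: "'v::euclidean_space \<Rightarrow> 'v \<Rightarrow> 'v"
    and a :: "nat \<Rightarrow> nat \<Rightarrow> real"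
    and m :: nat
  assumes "compact_simple_lie_algebra br"
    and "m \<ge> 2"
    and "\<forall>i\<in>{1..<m}. \<forall>j\<in>{1..<m}. a i j = a j i"
    and "\<forall>x :: nat \<Rightarrow> real. (\<exists>i\<in>{1..<m}. x i \<noteq> 0) \<longrightarrow>
           (\<Sum>i\<in>{1..<m}. \<Sum>j\<in>{1..<m}. a i j * x i * x j) > 0"
  shows "naturally_reductive br a m \<longleftrightarrow>
    ((\<forall>i\<in>{1..<m}. a i i > 0) \<and> (\<forall>i\<in>{1..<m}. \<forall>j\<in>{1..<m}. i \<noteq> j \<longrightarrow> a i j = 0))
    \<or> (\<exists>k\<in>{1..<m}. (\<forall>i\<in>{1..<m}. i \<noteq> k \<longrightarrow> - a i k = a i i \<and> a i i > 0)
          \<and> (\<forall>i\<in>{1..<m}. \<forall>j\<in>{1..<m}. i \<noteq> j \<and> i \<noteq> k \<and> j \<noteq> k \<longrightarrow> a i j = 0)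
          \<and> a k k > (\<Sum>i\<in>{1..<m} - {k}. a i i))
    \<or> (\<exists>\<alpha> :: nat \<Rightarrow> real. (\<forall>i\<in>{1..m}. \<alpha> i \<noteq> 0)
          \<and> (\<forall>i\<in>{1..<m}. \<forall>j\<in>{1..<m}.
                a i j = (if i = j then \<alpha> i else 0) - \<alpha> i * \<alpha> j / (\<Sum>l\<in>{1..m}. \<alpha> l))
          \<and> ((\<forall>i\<in>{1..m}. \<alpha> i > 0)
             \<or> ((\<exists>!i. i \<in> {1..m} \<and> \<alpha> i < 0) \<and> (\<Sum>l\<in>{1..m}. \<alpha> l) < 0)))"
proof -
  interpret CSL br by (rule CSL.intro) (rule assms(1))
  have m: "m \<ge> 2" by (rule assms(2))
  show ?thesis
  proof
    assume nr: "naturally_reductive br a m"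
    obtain cc where T: "\<forall>u w v. Vc cc m u \<longrightarrow> Vc cc m w \<longrightarrow> Vc cc m v \<longrightarrow> Tf a m u w v = Tf a m v w u"
      using only_if_lie[OF m nr] by blast
    have c: "cls (GG a m) (\<lambda>r. if r = m then - (1 + (\<Sum>i\<in>{1..<m}. cc i)) else cc r) {1..m}"
      by (rule only_if_G[OF m assms(3) assms(4) T])
    show "((\<forall>i\<in>{1..<m}. a i i > 0) \<and> (\<forall>i\<in>{1..<m}. \<forall>j\<in>{1..<m}. i \<noteq> j \<longrightarrow> a i j = 0))
    \<or> (\<exists>k\<in>{1..<m}. (\<forall>i\<in>{1..<m}. i \<noteq> k \<longrightarrow> - a i k = a i i \<and> a i i > 0)
          \<and> (\<forall>i\<in>{1..<m}. \<forall>j\<in>{1..<m}. i \<noteq> j \<and> i \<noteq> k \<and> j \<noteq> k \<longrightarrow> a i j = 0)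
          \<and> a k k > (\<Sum>i\<in>{1..<m} - {k}. a i i))
    \<or> (\<exists>\<alpha> :: nat \<Rightarrow> real. (\<forall>i\<in>{1..m}. \<alpha> i \<noteq> 0)
          \<and> (\<forall>i\<in>{1..<m}. \<forall>j\<in>{1..<m}.
                a i j = (if i = j then \<alpha> i else 0) - \<alpha> i * \<alpha> j / (\<Sum>l\<in>{1..m}. \<alpha> l))
          \<and> ((\<forall>i\<in>{1..m}. \<alpha> i > 0)
             \<or> ((\<exists>!i. i \<in> {1..m} \<and> \<alpha> i < 0) \<and> (\<Sum>l\<in>{1..m}. \<alpha> l) < 0)))"
      by (rule final_only_if[OF m c mu_sum[OF m]])
  next
    assume H: "((\<forall>i\<in>{1..<m}. a i i > 0) \<and> (\<forall>i\<in>{1..<m}. \<forall>j\<in>{1..<m}. i \<noteq> j \<longrightarrow> a i j = 0))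
    \<or> (\<exists>k\<in>{1..<m}. (\<forall>i\<in>{1..<m}. i \<noteq> k \<longrightarrow> - a i k = a i i \<and> a i i > 0)
          \<and> (\<forall>i\<in>{1..<m}. \<forall>j\<in>{1..<m}. i \<noteq> j \<and> i \<noteq> k \<and> j \<noteq> k \<longrightarrow> a i j = 0)
          \<and> a k k > (\<Sum>i\<in>{1..<m} - {k}. a i i))
    \<or> (\<exists>\<alpha> :: nat \<Rightarrow> real. (\<forall>i\<in>{1..m}. \<alpha> i \<noteq> 0)
          \<and> (\<forall>i\<in>{1..<m}. \<forall>j\<in>{1..<m}.
                a i j = (if i = j then \<alpha> i else 0) - \<alpha> i * \<alpha> j / (\<Sum>l\<in>{1..m}. \<alpha> l))
          \<and> ((\<forall>i\<in>{1..m}. \<alpha> i > 0)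
             \<or> ((\<exists>!i. i \<in> {1..m} \<and> \<alpha> i < 0) \<and> (\<Sum>l\<in>{1..m}. \<alpha> l) < 0)))"
    then consider
        (A) "\<forall>i\<in>{1..<m}. \<forall>j\<in>{1..<m}. i \<noteq> j \<longrightarrow> a i j = 0"
      | (B) k where "k \<in> {1..<m}" "\<forall>i\<in>{1..<m}. i \<noteq> k \<longrightarrow> - a i k = a i i"
            "\<forall>i\<in>{1..<m}. \<forall>j\<in>{1..<m}. i \<noteq> j \<and> i \<noteq> k \<and> j \<noteq> k \<longrightarrow> a i j = 0"
      | (C) \<alpha> where "\<forall>i\<in>{1..<m}. \<forall>j\<in>{1..<m}.
                a i j = (if i = j then \<alpha> i else 0) - \<alpha> i * \<alpha> j / (\<Sum>l\<in>{1..m}. \<alpha> l)"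
            "(\<forall>i\<in>{1..m}. \<alpha> i > 0) \<or> ((\<exists>!i. i \<in> {1..m} \<and> \<alpha> i < 0) \<and> (\<Sum>l\<in>{1..m}. \<alpha> l) < 0)"
      by blast
    then show "naturally_reductive br a m"
    proof cases
      case A then show ?thesis by (rule if_a[OF m])
    next
      case (B k) then show ?thesis by (intro if_b[OF m B(1) assms(3)]) auto
    next
      case (C \<alpha>)
      have "(\<Sum>l\<in>{1..m}. \<alpha> l) \<noteq> 0"
      proof (cases "\<forall>i\<in>{1..m}. \<alpha> i > 0")
        case True
        have "(\<Sum>l\<in>{1..m}. \<alpha> l) > 0" using True m by (intro sum_pos) auto
        then show ?thesis by simp
      next
        case False then show ?thesis using C(2) by auto
      qed
      then show ?thesis by (rule if_c[OF m _ C(1)])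
    qed
  qed
qed



end
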